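(* Let $\mathcal D$ be a $k$-oriented Spherical Diagram and $H$ an attractor hull of $\mathcal D$. If an arc of $\mathcal D$ intersects the boundary of $H$ at a point $x$, then there is an arc of $\mathcal D$ that crosses the boundary of $H$ at a point $y$ such that $x$ and $y$ are $H$-connected with respect to $\mathcal D$ and lie on a common edge of $H$. Moreover, if $x\neq y$, then $y$ is not a vertex of $H$.
   Context: A geodesic arc on the unit sphere in $\mathbb R^3$ is the unique shortest curve joining two non-antipodal points. An arc $a$ blocks an arc $b$ (equivalently, $b$ hits $a$) if an endpoint of $b$ lies in the relative interior of $a$. A Spherical Diagram (SD) is a finite non-empty collection $\mathcal D$ of pairwise interior-disjoint geodesic arcs on the unit sphere such that each arc of $\mathcal D$ is blocked by arcs of $\mathcal D$ at each of its endpoints. An SD $\mathcal D$ is $k$-oriented if there exist a set $P$ of $k$ points on the unit sphere (poles), no two antipodal, and a function $f\colon\mathcal D\to P$ such that each arc $a\in\mathcal D$ lies on a great circle through $f(a)$ but contains neither $f(a)$ nor its antipode $-f(a)$ (the anti-pole of $f(a)$). An attractor of a $k$-oriented SD is a set of $k$ points, no two antipodal, chosen among its poles and anti-poles. An attractor hull is the spherical convex hull of an attractor (the whole sphere if the attractor is not contained in any open hemisphere). "Intersect" means "have non-empty intersection". An arc $a$ crosses a curve $\gamma$ if $a\cap\gamma$ contains an isolated point $x$ in the relative interior of $a$ such that every neighborhood of $x$ contains points of $\gamma$ on both sides of $a$. For a region $R$ of the sphere, two points $x,y$ are $R$-connected (with respect to $\mathcal D$) if there is a path from $x$ to $y$ contained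 in the union of the arcs of $\mathcal D$ and in $R$. *)

theory Defs
  imports "HOL-Analysis.Analysis"
begin

type_synonym pt = "real^3"

definition arc_ends :: "pt \<Rightarrow> pt \<Rightarrow> bool" where
  "arc_ends p q \<longleftrightarrow> norm p = 1 \<and> norm q = 1 \<and> p \<noteq> q \<and> p \<noteq> - q"

text \<open>The (minor) geodesic arc joining p and q, as a point set.\<close>
definition garc :: "pt \<Rightarrow> pt \<Rightarrow> pt set" where
  "garc p q = {x. norm x = 1 \<and> (\<exists>a b. 0 \<le> a \<and> 0 \<le> b \<and> x = a *\<^sub>R p + b *\<^sub>R q)}"

definition is_arc :: "pt set \<Rightarrow> bool" where
  "is_arc A \<longleftrightarrow> (\<exists>p q. arc_ends p q \<and> A = garc p q)"

definition arc_endpoint :: "pt set \<Rightarrow> pt \<Rightarrow> bool" where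
  "arc_endpoint A x \<longleftrightarrow> (\<exists>p q. arc_ends p q \<and> A = garc p q \<and> (x = p \<or> x = q))"

definition arc_interior :: "pt set \<Rightarrow> pt set" where
  "arc_interior A = A - {x. arc_endpoint A x}"

definition spherical_diagram :: "pt set set \<Rightarrow> bool" where
  "spherical_diagram D \<longleftrightarrow> finite D \<and> D \<noteq> {} \<and> (\<forall>A\<in>D. is_arc A)
    \<and> (\<forall>A\<in>D. \<forall>B\<in>D. A \<noteq> B \<longrightarrow> arc_interior A \<inter> arc_interior B = {})
    \<and> (\<forall>A\<in>D. \<forall>x. arc_endpoint A x \<longrightarrow> (\<exists>B\<in>D. x \<in> arc_interior B))"

text \<open>P and f witness that D is k-oriented (P = set of poles).\<close>
definition k_orientation :: "pt set set \<Rightarrow> nat \<Rightarrow> pt set \<Rightarrow> (pt set \<Rightarrow> pt) \<Rightarrow> bool" where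
  "k_orientation D k P f \<longleftrightarrow> finite P \<and> card P = k \<and> P \<subseteq> sphere 0 1
    \<and> (\<forall>p\<in>P. - p \<notin> P)
    \<and> (\<forall>A\<in>D. f A \<in> P
          \<and> (\<exists>n. n \<noteq> 0 \<and> n \<bullet> f A = 0 \<and> (\<forall>x\<in>A. n \<bullet> x = 0))
          \<and> f A \<notin> A \<and> - f A \<notin> A)"

definition k_oriented :: "pt set set \<Rightarrow> nat \<Rightarrow> bool" where
  "k_oriented D k \<longleftrightarrow> (\<exists>P f. k_orientation D k P f)"

definition attractor :: "pt set \<Rightarrow> pt set \<Rightarrow> bool" where
  "attractor P Att \<longleftrightarrow> finite Att \<and> Att \<subseteq> P \<union> uminus ` P \<and> card Att = card P
    \<and> (\<forall>a\<in>Att. - a \<notin> Att)"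

definition in_open_hemisphere :: "pt set \<Rightarrow> bool" where
  "in_open_hemisphere S \<longleftrightarrow> (\<exists>n. \<forall>a\<in>S. n \<bullet> a > 0)"

definition spherical_hull :: "pt set \<Rightarrow> pt set" where
  "spherical_hull S = sphere 0 1 \<inter> conic hull (convex hull S)"

definition attractor_hull :: "pt set \<Rightarrow> pt set" where
  "attractor_hull Att = (if in_open_hemisphere Att then spherical_hull Att else sphere 0 1)"

definition sph_boundary :: "pt set \<Rightarrow> pt set" where
  "sph_boundary R = (top_of_set (sphere 0 1)) frontier_of R"

text \<open>Edges and vertices of a spherical convex region H: traces on the sphere of the
  2-dimensional, resp. 1-dimensional, faces of the convex cone spanned by H.\<close>
definition sph_edge :: "pt set \<Rightarrow> pt set \<Rightarrow> bool" where
  "sph_edge H E \<longleftrightarrow> (\<exists>F. F face_of (conic hull H) \<and> aff_dim F = 2 \<and> E = F \<inter> sphere 0 1)"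

definition sph_vertex :: "pt set \<Rightarrow> pt \<Rightarrow> bool" where
  "sph_vertex H v \<longleftrightarrow> norm v = 1 \<and> (conic hull {v}) face_of (conic hull H)"

definition crosses_at :: "pt set \<Rightarrow> pt set \<Rightarrow> pt \<Rightarrow> bool" where
  "crosses_at A \<gamma> x \<longleftrightarrow> x \<in> arc_interior A \<and> x \<in> \<gamma>
    \<and> (\<exists>e>0. \<forall>z\<in>A \<inter> \<gamma>. dist z x < e \<longrightarrow> z = x)
    \<and> (\<exists>n. n \<noteq> 0 \<and> (\<forall>z\<in>A. n \<bullet> z = 0)
         \<and> (\<forall>e>0. (\<exists>z\<in>\<gamma>. dist z x < e \<and> n \<bullet> z > 0) \<and> (\<exists>z\<in>\<gamma>. dist z x < e \<and> n \<bullet> z < 0)))"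

definition R_connected :: "pt set set \<Rightarrow> pt set \<Rightarrow> pt \<Rightarrow> pt \<Rightarrow> bool" where
  "R_connected D R x y \<longleftrightarrow> (\<exists>g. path g \<and> path_image g \<subseteq> (\<Union>D) \<inter> R
      \<and> pathstart g = x \<and> pathfinish g = y)"

end

theory Submission
  imports Defs
begin

unbundle cross3_syntax


definition det3 :: "pt \<Rightarrow> pt \<Rightarrow> pt \<Rightarrow> real" where
  "det3 u v w = (u \<times> v) \<bullet> w"

lemma cramer:
  "det3 u v w *\<^sub>R z = det3 z v w *\<^sub>R u + det3 u z w *\<^sub>R v + det3 u v z *\<^sub>R w"
  unfolding det3_def by (simp add: cross3_simps forall_3)

lemma dual_cramer:
  "det3 u v z *\<^sub>R n = (u \<bullet> n) *\<^sub>R (v \<times> z) + (v \<bullet> n) *\<^sub>R (z \<times> u) + (z \<bullet> n) *\<^sub>R (u \<times> v)"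
  unfolding det3_def by (simp add: cross3_simps forall_3)

lemma det3_add1: "det3 (u + u') v w = det3 u v w + det3 u' v w"
  and det3_add2: "det3 u (v + v') w = det3 u v w + det3 u v' w"
  and det3_add3: "det3 u v (w + w') = det3 u v w + det3 u v w'"
  and det3_scale1: "det3 (c *\<^sub>R u) v w = c * det3 u v w"
  and det3_scale2: "det3 u (c *\<^sub>R v) w = c * det3 u v w"
  and det3_scale3: "det3 u v (c *\<^sub>R w) = c * det3 u v w"
  and det3_diff1: "det3 (u - u') v w = det3 u v w - det3 u' v w"
  and det3_diff2: "det3 u (v - v') w = det3 u v w - det3 u v' w"
  and det3_diff3: "det3 u v (w - w') = det3 u v w - det3 u v w'"
  and det3_neg1: "det3 (- u) v w = - det3 u v w"
  and det3_neg2: "det3 u (- v) w = - det3 u v w"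
  and det3_neg3: "det3 u v (- w) = - det3 u v w"
  unfolding det3_def
  by (simp_all add: cross_add_left cross_add_right cross_mult_left cross_mult_right
      inner_add_left inner_add_right inner_diff_left inner_diff_right
      Cross3.left_diff_distrib Cross3.right_diff_distrib)

lemmas det3_lin = det3_add1 det3_add2 det3_add3 det3_scale1 det3_scale2 det3_scale3
  det3_diff1 det3_diff2 det3_diff3 det3_neg1 det3_neg2 det3_neg3

lemma det3_self: "det3 u u w = 0" "det3 u v u = 0" "det3 u v v = 0"
  unfolding det3_def by (simp_all add: dot_cross_self)

lemma det3_swap12: "det3 v u w = - det3 u v w"
  unfolding det3_def by (simp add: cross3_simps)
lemma det3_swap23: "det3 u w v = - det3 u v w"
  unfolding det3_def by (simp add: cross3_simps)
lemma det3_cyc: "det3 v w u = det3 u v w"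
  unfolding det3_def by (simp add: cross3_simps)

lemma coplanar:
  assumes "n \<noteq> 0" "u \<bullet> n = 0" "v \<bullet> n = 0" "z \<bullet> n = 0"
  shows "det3 u v z = 0"
  using dual_cramer[of u v z n] assms by auto

lemma cramer2:
  assumes "det3 u v z = 0"
  shows "det3 u v w *\<^sub>R z = det3 z v w *\<^sub>R u + det3 u z w *\<^sub>R v"
  using cramer[of u v w z] assms by simp

lemma perp_parallel:
  assumes "u \<times> v \<noteq> 0" "m \<bullet> u = 0" "m \<bullet> v = 0"
  shows "m = (det3 u v m / (norm (u \<times> v))\<^sup>2) *\<^sub>R (u \<times> v)"
proof -
  have a: "det3 u v (u \<times> v) = (norm (u \<times> v))\<^sup>2"
    unfolding det3_def by (simp add: power2_norm_eq_inner)
  have b: "det3 m v (u \<times> v) = 0" "det3 u m (u \<times> v) = 0"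
    unfolding det3_def using assms by (simp_all add: dot_cross inner_commute)
  have "(norm (u \<times> v))\<^sup>2 *\<^sub>R m = det3 u v m *\<^sub>R (u \<times> v)"
    using cramer[of u v "u \<times> v" m] a b by simp
  moreover have c: "(norm (u \<times> v))\<^sup>2 \<noteq> 0" using assms by simp
  ultimately have "m = inverse ((norm (u \<times> v))\<^sup>2) *\<^sub>R (det3 u v m *\<^sub>R (u \<times> v))"
    by (metis scaleR_scaleR left_inverse scaleR_one)
  then show ?thesis by (simp add: divide_inverse mult.commute)
qed

lemma perp3_zero:
  assumes "det3 u v w \<noteq> 0" "m \<bullet> u = 0" "m \<bullet> v = 0" "m \<bullet> w = 0"
  shows "m = 0"
  using dual_cramer[of u v w m] assms by (simp add: inner_commute)

lemma unit_cross_nz: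
  assumes "norm p = 1" "norm q = 1" "p \<noteq> q" "p \<noteq> - q"
  shows "p \<times> q \<noteq> 0"
proof
  assume "p \<times> q = 0"
  then have "collinear {0, p, q}" by (simp add: cross_eq_0)
  then obtain c where c: "q = c *\<^sub>R p" using assms collinear_lemma[of p q] by fastforce
  then have "\<bar>c\<bar> = 1" using assms by simp
  then have "c = 1 \<or> c = -1" by auto
  then show False using c assms by auto
qed

lemma unit_scale_eq:
  assumes "norm z = 1" "norm u = 1" "z = c *\<^sub>R u" "c \<ge> 0"
  shows "z = u"
proof -
  have "\<bar>c\<bar> = 1" using assms by simp
  then have "c = 1" using assms by simp
  then show ?thesis using assms by simp
qed

lemma garc_sym: "garc p q = garc q p"
  unfolding garc_def by (auto; metis add.commute)

lemma garc_ends_mem: "norm p = 1 \<Longrightarrow> p \<in> garc p q" "norm q = 1 \<Longrightarrow> q \<in> garc p q"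
  unfolding garc_def
  by (rule CollectI, rule conjI, simp, rule exI[of _ 1], rule exI[of _ 0], simp,
      rule CollectI, rule conjI, simp, rule exI[of _ 0], rule exI[of _ 1], simp)

lemma arc_ends_sym: "arc_ends p q \<Longrightarrow> arc_ends q p"
  unfolding arc_ends_def by (auto simp: minus_equation_iff)

lemma arc_ends_nz: "arc_ends p q \<Longrightarrow> p \<times> q \<noteq> 0"
  unfolding arc_ends_def using unit_cross_nz by blast

lemma arc_det_pos: "arc_ends p q \<Longrightarrow> det3 p q (p \<times> q) > 0"
  using arc_ends_nz[of p q] unfolding det3_def by simp

lemma arc_perp: "p \<bullet> (p \<times> q) = 0" "q \<bullet> (p \<times> q) = 0" "(p \<times> q) \<bullet> p = 0" "(p \<times> q) \<bullet> q = 0"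
  by (simp_all add: dot_cross_self inner_commute)

lemma plane_decomp:
  assumes "arc_ends p q" "(p \<times> q) \<bullet> z = 0"
  shows "z = (det3 z q (p \<times> q) / det3 p q (p \<times> q)) *\<^sub>R p + (det3 p z (p \<times> q) / det3 p q (p \<times> q)) *\<^sub>R q"
proof -
  have "det3 p q z = 0"
    by (rule coplanar[where n="p \<times> q"]) (use assms arc_ends_nz in \<open>auto simp: arc_perp inner_commute\<close>)
  then have e: "det3 p q (p \<times> q) *\<^sub>R z = det3 z q (p \<times> q) *\<^sub>R p + det3 p z (p \<times> q) *\<^sub>R q"
    by (rule cramer2)
  have pos: "det3 p q (p \<times> q) \<noteq> 0" using arc_det_pos[OF assms(1)] by simp
  have "z = inverse (det3 p q (p \<times> q)) *\<^sub>R (det3 p q (p \<times> q) *\<^sub>R z)" using pos by simp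
  also have "\<dots> = inverse (det3 p q (p \<times> q)) *\<^sub>R (det3 z q (p \<times> q) *\<^sub>R p + det3 p z (p \<times> q) *\<^sub>R q)"
    using e by simp
  finally show ?thesis by (simp add: scaleR_add_right divide_inverse mult.commute)
qed

lemma garc_char:
  assumes "arc_ends p q"
  shows "z \<in> garc p q \<longleftrightarrow> norm z = 1 \<and> (p \<times> q) \<bullet> z = 0 \<and> det3 p z (p \<times> q) \<ge> 0 \<and> det3 z q (p \<times> q) \<ge> 0"
proof
  assume "z \<in> garc p q"
  then obtain a b where ab: "norm z = 1" "0 \<le> a" "0 \<le> b" "z = a *\<^sub>R p + b *\<^sub>R q"
    unfolding garc_def by auto
  have pos: "det3 p q (p \<times> q) > 0" using arc_det_pos[OF assms] .
  show "norm z = 1 \<and> (p \<times> q) \<bullet> z = 0 \<and> det3 p z (p \<times> q) \<ge> 0 \<and> det3 z q (p \<times> q) \<ge> 0"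
    using ab pos by (simp add: det3_lin det3_self inner_add_right arc_perp)
next
  assume h: "norm z = 1 \<and> (p \<times> q) \<bullet> z = 0 \<and> det3 p z (p \<times> q) \<ge> 0 \<and> det3 z q (p \<times> q) \<ge> 0"
  have pos: "det3 p q (p \<times> q) > 0" using arc_det_pos[OF assms] .
  have d: "z = (det3 z q (p \<times> q) / det3 p q (p \<times> q)) *\<^sub>R p + (det3 p z (p \<times> q) / det3 p q (p \<times> q)) *\<^sub>R q"
    using plane_decomp[OF assms, of z] h by simp
  show "z \<in> garc p q"
    unfolding garc_def
    apply (rule CollectI, rule conjI)
     apply (simp add: h)
    apply (rule exI[of _ "det3 z q (p \<times> q) / det3 p q (p \<times> q)"])
    apply (rule exI[of _ "det3 p z (p \<times> q) / det3 p q (p \<times> q)"])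
    using h pos d by simp
qed

lemma garc_endp_p:
  assumes "arc_ends p q" "z \<in> garc p q" "det3 p z (p \<times> q) = 0"
  shows "z = p"
proof -
  have h: "norm z = 1" "(p \<times> q) \<bullet> z = 0" "det3 z q (p \<times> q) \<ge> 0"
    using assms garc_char by auto
  have pos: "det3 p q (p \<times> q) > 0" using arc_det_pos[OF assms(1)] .
  have "z = (det3 z q (p \<times> q) / det3 p q (p \<times> q)) *\<^sub>R p"
    using plane_decomp[OF assms(1) h(2)] assms(3) by simp
  moreover have "det3 z q (p \<times> q) / det3 p q (p \<times> q) \<ge> 0" using h pos by simp
  ultimately show ?thesis
    using unit_scale_eq[of z p] h assms(1) unfolding arc_ends_def by blast
qed

lemma garc_endp_q:
  assumes "arc_ends p q" "z \<in> garc p q" "det3 z q (p \<times> q) = 0"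
  shows "z = q"
proof -
  have h: "norm z = 1" "(p \<times> q) \<bullet> z = 0" "det3 p z (p \<times> q) \<ge> 0"
    using assms garc_char by auto
  have pos: "det3 p q (p \<times> q) > 0" using arc_det_pos[OF assms(1)] .
  have "z = (det3 p z (p \<times> q) / det3 p q (p \<times> q)) *\<^sub>R q"
    using plane_decomp[OF assms(1) h(2)] assms(3) by simp
  moreover have "det3 p z (p \<times> q) / det3 p q (p \<times> q) \<ge> 0" using h pos by simp
  ultimately show ?thesis
    using unit_scale_eq[of z q] h assms(1) unfolding arc_ends_def by blast
qed

lemma garc_extreme:
  assumes "arc_ends p q" "arc_ends p' q'" "garc p q = garc p' q'"
  shows "p = p' \<or> p = q'"
proof (rule ccontr)
  assume ne: "\<not> (p = p' \<or> p = q')"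
  have "p \<in> garc p' q'" using assms garc_ends_mem unfolding arc_ends_def by auto
  then obtain a b where ab: "0 \<le> a" "0 \<le> b" "p = a *\<^sub>R p' + b *\<^sub>R q'"
    unfolding garc_def by auto
  have "a \<noteq> 0"
  proof
    assume "a = 0"
    then have "p = b *\<^sub>R q'" using ab by simp
    then have "p = q'" using unit_scale_eq[of p q' b] ab assms unfolding arc_ends_def by auto
    then show False using ne by simp
  qed
  moreover have "b \<noteq> 0"
  proof
    assume "b = 0"
    then have "p = a *\<^sub>R p'" using ab by simp
    then have "p = p'" using unit_scale_eq[of p p' a] ab assms unfolding arc_ends_def by auto
    then show False using ne by simp
  qed
  ultimately have apos: "a > 0" "b > 0" using ab by auto
  have m: "p' \<in> garc p q" "q' \<in> garc p q"
    using assms garc_ends_mem unfolding arc_ends_def by auto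
  then have g: "det3 p p' (p \<times> q) \<ge> 0" "det3 p q' (p \<times> q) \<ge> 0"
    using garc_char[OF assms(1)] by auto
  have "0 = det3 p p (p \<times> q)" by (simp add: det3_self)
  also have "\<dots> = a * det3 p p' (p \<times> q) + b * det3 p q' (p \<times> q)"
    by (subst ab(3)) (simp add: det3_lin)
  finally have "det3 p p' (p \<times> q) = 0" "det3 p q' (p \<times> q) = 0"
    using apos g by (smt (verit) mult_nonneg_nonneg mult_pos_pos)+
  then have "p' = p" "q' = p" using garc_endp_p[OF assms(1)] m by auto
  then show False using assms(2) unfolding arc_ends_def by simp
qed

lemma garc_ends_unique:
  assumes "arc_ends p q" "arc_ends p' q'" "garc p q = garc p' q'"
  shows "{p, q} = {p', q'}"
proof -
  have "p = p' \<or> p = q'" using garc_extreme[OF assms] .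
  moreover have "q = p' \<or> q = q'"
    using garc_extreme[OF arc_ends_sym[OF assms(1)] assms(2)] assms(3) garc_sym by metis
  moreover have "p' = p \<or> p' = q"
    using garc_extreme[OF assms(2) assms(1)] assms(3) by metis
  moreover have "q' = p \<or> q' = q"
    using garc_extreme[OF arc_ends_sym[OF assms(2)] assms(1)] assms(3) garc_sym by metis
  ultimately show ?thesis using assms unfolding arc_ends_def by auto
qed

lemma arc_endpoint_garc:
  assumes "arc_ends p q"
  shows "arc_endpoint (garc p q) x \<longleftrightarrow> x = p \<or> x = q"
  unfolding arc_endpoint_def
  using garc_ends_unique[OF assms] assms by blast

lemma arc_interior_garc:
  assumes "arc_ends p q"
  shows "arc_interior (garc p q) = garc p q - {p, q}"
  unfolding arc_interior_def using arc_endpoint_garc[OF assms] by auto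

lemma arc_interior_char:
  assumes "arc_ends p q"
  shows "z \<in> arc_interior (garc p q) \<longleftrightarrow>
    norm z = 1 \<and> (p \<times> q) \<bullet> z = 0 \<and> det3 p z (p \<times> q) > 0 \<and> det3 z q (p \<times> q) > 0"
proof
  assume "z \<in> arc_interior (garc p q)"
  then have z: "z \<in> garc p q" "z \<noteq> p" "z \<noteq> q" using arc_interior_garc[OF assms] by auto
  then have "det3 p z (p \<times> q) \<noteq> 0" "det3 z q (p \<times> q) \<noteq> 0"
    using garc_endp_p[OF assms] garc_endp_q[OF assms] by auto
  then show "norm z = 1 \<and> (p \<times> q) \<bullet> z = 0 \<and> det3 p z (p \<times> q) > 0 \<and> det3 z q (p \<times> q) > 0"
    using z garc_char[OF assms] by auto
next
  assume h: "norm z = 1 \<and> (p \<times> q) \<bullet> z = 0 \<and> det3 p z (p \<times> q) > 0 \<and> det3 z q (p \<times> q) > 0"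
  then have "z \<in> garc p q" using garc_char[OF assms] by auto
  moreover have "z \<noteq> p" "z \<noteq> q" using h by (auto simp: det3_self)
  ultimately show "z \<in> arc_interior (garc p q)" using arc_interior_garc[OF assms] by auto
qed

lemma arc_interior_sym: "arc_interior (garc p q) = arc_interior (garc q p)"
  by (simp add: garc_sym)

lemma garc_cone:
  assumes "u \<in> garc p q" "v \<in> garc p q" "a \<ge> 0" "b \<ge> 0" "a *\<^sub>R u + b *\<^sub>R v \<noteq> 0"
  shows "sgn (a *\<^sub>R u + b *\<^sub>R v) \<in> garc p q"
proof -
  obtain a1 b1 where 1: "0 \<le> a1" "0 \<le> b1" "u = a1 *\<^sub>R p + b1 *\<^sub>R q" using assms unfolding garc_def by auto
  obtain a2 b2 where 2: "0 \<le> a2" "0 \<le> b2" "v = a2 *\<^sub>R p + b2 *\<^sub>R q" using assms unfolding garc_def by auto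
  define w where "w = a *\<^sub>R u + b *\<^sub>R v"
  have nw: "norm w > 0" using assms w_def by simp
  have "sgn w = (inverse (norm w) * (a * a1 + b * a2)) *\<^sub>R p + (inverse (norm w) * (a * b1 + b * b2)) *\<^sub>R q"
    unfolding sgn_div_norm w_def 1 2 by (simp add: algebra_simps divide_inverse scaleR_add_right)
  moreover have "norm (sgn w) = 1" using nw by (simp add: norm_sgn)
  ultimately show ?thesis unfolding garc_def w_def[symmetric] using 1 2 assms nw
    by (intro CollectI conjI exI[where x="inverse (norm w) * (a * a1 + b * a2)"]
        exI[where x="inverse (norm w) * (a * b1 + b * b2)"]) auto
qed


locale conesetup =
  fixes C :: "pt set"
  assumes convC: "convex C" and conC: "conic C" and clC: "closed C" and neC: "C \<noteq> {}"
begin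

lemma sum3_zero:
  fixes a b c x y z :: real
  assumes "a > 0" "b > 0" "c > 0" "x \<ge> 0" "y \<ge> 0" "z \<ge> 0" "a * x + b * y + c * z = 0"
  shows "x = 0" "y = 0" "z = 0"
proof -
  have "a * x \<ge> 0" "b * y \<ge> 0" "c * z \<ge> 0" using assms by simp_all
  then have "a * x = 0" "b * y = 0" "c * z = 0" using assms(7) by linarith+
  then show "x = 0" "y = 0" "z = 0" using assms by simp_all
qed

lemma sum2_zero:
  fixes a b x y :: real
  assumes "a > 0" "b > 0" "x \<ge> 0" "y \<ge> 0" "a * x + b * y = 0"
  shows "x = 0" "y = 0"
  using sum3_zero[of a b 1 x y 0] assms by simp_all

definition HH where "HH = sphere 0 1 \<inter> C"
definition BD where "BD = top_of_set (sphere (0::pt) 1) frontier_of HH"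

lemma zeroC: "0 \<in> C" using conC neC conic_contains_0 by blast

lemma scaleC: "u \<in> C \<Longrightarrow> c \<ge> 0 \<Longrightarrow> c *\<^sub>R u \<in> C"
  using conC conic_mul by blast

lemma addC: assumes "u \<in> C" "v \<in> C" shows "u + v \<in> C"
proof -
  have "(1/2::real) *\<^sub>R u + (1/2::real) *\<^sub>R v \<in> C"
    by (rule convexD[OF convC assms]) auto
  then have "2 *\<^sub>R ((1/2::real) *\<^sub>R u + (1/2::real) *\<^sub>R v) \<in> C" using scaleC by simp
  then show ?thesis by (simp add: scaleR_add_right)
qed

lemma combC: "u \<in> C \<Longrightarrow> v \<in> C \<Longrightarrow> a \<ge> 0 \<Longrightarrow> b \<ge> 0 \<Longrightarrow> a *\<^sub>R u + b *\<^sub>R v \<in> C"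
  by (intro addC scaleC)

lemma comb3C: "u \<in> C \<Longrightarrow> v \<in> C \<Longrightarrow> w \<in> C \<Longrightarrow> a \<ge> 0 \<Longrightarrow> b \<ge> 0 \<Longrightarrow> c \<ge> 0 \<Longrightarrow>
   a *\<^sub>R u + b *\<^sub>R v + c *\<^sub>R w \<in> C"
  by (intro addC scaleC)

lemma sgnC: "u \<in> C \<Longrightarrow> sgn u \<in> C"
  unfolding sgn_div_norm by (rule scaleC) auto

lemma supp:
  assumes "z \<in> C" "z \<notin> interior C"
  obtains m where "m \<noteq> 0" "m \<bullet> z = 0" "\<And>c. c \<in> C \<Longrightarrow> m \<bullet> c \<ge> 0"
proof -
  obtain m where m: "m \<noteq> 0" "\<And>c. c \<in> C \<Longrightarrow> m \<bullet> z \<le> m \<bullet> c"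
  proof (cases "interior C = {}")
    case True
    obtain a b where ab: "a \<noteq> 0" "C \<subseteq> {x. a \<bullet> x = b}"
      using empty_interior_subset_hyperplane[OF convC True] by blast
    have "\<And>c. c \<in> C \<Longrightarrow> a \<bullet> z \<le> a \<bullet> c"
    proof -
      fix c assume "c \<in> C"
      then have "a \<bullet> c = b" "a \<bullet> z = b" using ab assms(1) by auto
      then show "a \<bullet> z \<le> a \<bullet> c" by simp
    qed
    then show ?thesis by (rule that[OF ab(1)])
  next
    case False
    then have "rel_interior C = interior C" by (simp add: rel_interior_nonempty_interior)
    then have "z \<notin> rel_interior C" using assms by simp
    then obtain a where a: "a \<noteq> 0" "\<And>y. y \<in> C \<Longrightarrow> a \<bullet> z \<le> a \<bullet> y"
      using supporting_hyperplane_rel_boundary[OF convC assms(1)] by metis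
    show ?thesis by (rule that[OF a])
  qed
  have "m \<bullet> z \<le> 0" using m(2)[OF zeroC] by simp
  moreover have "m \<bullet> z \<le> m \<bullet> (2 *\<^sub>R z)" by (rule m(2)) (rule scaleC[OF assms(1)], simp)
  ultimately have mz: "m \<bullet> z = 0" by simp
  have "\<And>c. c \<in> C \<Longrightarrow> m \<bullet> c \<ge> 0" using m(2) mz by fastforce
  then show ?thesis by (rule that[OF m(1) mz])
qed

lemma intpos:
  assumes "w \<in> interior C" "m \<noteq> 0" "\<And>c. c \<in> C \<Longrightarrow> m \<bullet> c \<ge> 0"
  shows "m \<bullet> w > 0"
proof -
  obtain r where r: "r > 0" "ball w r \<subseteq> C" using assms(1) by (meson mem_interior)
  define w' where "w' = w - (r / 2 / norm m) *\<^sub>R m"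
  have "dist w w' < r" using r assms(2) by (simp add: w'_def dist_norm)
  then have "w' \<in> C" using r by auto
  then have "m \<bullet> w' \<ge> 0" using assms(3) by simp
  moreover have "m \<bullet> w' = m \<bullet> w - r / 2 * norm m"
    using assms(2) by (simp add: w'_def inner_diff_right power2_norm_eq_inner[symmetric] power2_eq_square)
  moreover have "r / 2 * norm m > 0" using r assms(2) by simp
  ultimately show ?thesis by linarith
qed

lemma int3:
  assumes "u \<in> C" "v \<in> C" "w \<in> C" "det3 u v w \<noteq> 0" "a > 0" "b > 0" "c > 0"
  shows "a *\<^sub>R u + b *\<^sub>R v + c *\<^sub>R w \<in> interior C"
proof (rule ccontr)
  let ?z = "a *\<^sub>R u + b *\<^sub>R v + c *\<^sub>R w"
  assume "?z \<notin> interior C"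
  moreover have "?z \<in> C" using comb3C assms by simp
  ultimately obtain m where m: "m \<noteq> 0" "m \<bullet> ?z = 0" "\<And>c. c \<in> C \<Longrightarrow> m \<bullet> c \<ge> 0"
    using supp by metis
  have "m \<bullet> u \<ge> 0" "m \<bullet> v \<ge> 0" "m \<bullet> w \<ge> 0" using m assms by auto
  moreover have "a * (m \<bullet> u) + b * (m \<bullet> v) + c * (m \<bullet> w) = 0"
    using m(2) by (simp add: inner_add_right)
  ultimately have "m \<bullet> u = 0" "m \<bullet> v = 0" "m \<bullet> w = 0" using assms(5-7) sum3_zero
    by metis+
  then have "m = 0" using perp3_zero assms(4) by blast
  then show False using m by simp
qed

lemma intseg:
  assumes "u \<in> C" "w \<in> interior C" "a \<ge> 0" "b > 0"
  shows "a *\<^sub>R u + b *\<^sub>R w \<in> interior C"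
proof (rule ccontr)
  let ?z = "a *\<^sub>R u + b *\<^sub>R w"
  assume "?z \<notin> interior C"
  moreover have "?z \<in> C" using combC assms interior_subset by (metis less_imp_le subsetD)
  ultimately obtain m where m: "m \<noteq> 0" "m \<bullet> ?z = 0" "\<And>c. c \<in> C \<Longrightarrow> m \<bullet> c \<ge> 0"
    using supp by metis
  have "m \<bullet> w > 0" using intpos assms m by blast
  moreover have "m \<bullet> u \<ge> 0" using m assms by auto
  moreover have "a * (m \<bullet> u) + b * (m \<bullet> w) = 0" using m(2) by (simp add: inner_add_right)
  ultimately show False using assms
    by (metis add_nonneg_pos mult_nonneg_nonneg mult_pos_pos less_irrefl less_imp_le)
qed

lemma intX:
  assumes "N \<noteq> 0" "x \<in> C" "b \<in> C" "N \<bullet> x = 0" "N \<bullet> b = 0" "x \<times> b \<noteq> 0"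
    "c1 \<in> C" "c2 \<in> C" "N \<bullet> c1 > 0" "N \<bullet> c2 < 0" "\<alpha> > 0" "\<beta> > 0"
  shows "\<alpha> *\<^sub>R x + \<beta> *\<^sub>R b \<in> interior C"
proof (rule ccontr)
  let ?z = "\<alpha> *\<^sub>R x + \<beta> *\<^sub>R b"
  assume "?z \<notin> interior C"
  moreover have "?z \<in> C" using combC assms by simp
  ultimately obtain m where m: "m \<noteq> 0" "m \<bullet> ?z = 0" "\<And>c. c \<in> C \<Longrightarrow> m \<bullet> c \<ge> 0"
    using supp by metis
  have "m \<bullet> x \<ge> 0" "m \<bullet> b \<ge> 0" using m assms by auto
  moreover have "\<alpha> * (m \<bullet> x) + \<beta> * (m \<bullet> b) = 0" using m(2) by (simp add: inner_add_right)
  ultimately have mx: "m \<bullet> x = 0" "m \<bullet> b = 0" using assms sum2_zero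
    by metis+
  define k where "k = det3 x b m / (norm (x \<times> b))\<^sup>2"
  define k' where "k' = det3 x b N / (norm (x \<times> b))\<^sup>2"
  have mk: "m = k *\<^sub>R (x \<times> b)" unfolding k_def by (rule perp_parallel) (use assms mx in auto)
  have Nk: "N = k' *\<^sub>R (x \<times> b)" unfolding k'_def
    by (rule perp_parallel) (use assms in \<open>auto simp: inner_commute\<close>)
  define s1 where "s1 = (x \<times> b) \<bullet> c1"
  define s2 where "s2 = (x \<times> b) \<bullet> c2"
  have "k' * s1 > 0" "k' * s2 < 0" using assms Nk unfolding s1_def s2_def by auto
  then have neg: "(k' * s1) * (k' * s2) < 0" by (simp add: mult_pos_neg)
  have "k * s1 \<ge> 0" "k * s2 \<ge> 0" using m(3) assms mk unfolding s1_def s2_def by (metis inner_scaleR_left)+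
  then have pos: "(k * s1) * (k * s2) \<ge> 0" by simp
  have "k \<noteq> 0" using m mk by auto
  then have "k * k > 0" using not_real_square_gt_zero by blast
  have "k' \<noteq> 0" using Nk assms(1) by auto
  then have "k' * k' > 0" using not_real_square_gt_zero by blast
  from neg have "(k' * k') * (s1 * s2) < 0" by (simp add: algebra_simps)
  then have "s1 * s2 < 0" using \<open>k' * k' > 0\<close> by (simp add: mult_less_0_iff)
  moreover from pos have kk: "(k * k) * (s1 * s2) \<ge> 0" by (simp add: algebra_simps)
  have "s1 * s2 \<ge> 0"
  proof (rule ccontr)
    assume "\<not> s1 * s2 \<ge> 0"
    then have "(k * k) * (s1 * s2) < 0" using \<open>k * k > 0\<close> by (simp add: mult_pos_neg)
    then show False using kk by simp
  qed
  ultimately show False by simp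
qed

lemma HH_closedin: "closedin (top_of_set (sphere 0 1)) HH"
  unfolding HH_def using clC closedin_closed_Int by blast

lemma BD_sub: "BD \<subseteq> HH"
  unfolding BD_def using HH_closedin frontier_of_subset_closedin by blast

lemma BD_notint:
  assumes "z \<in> BD" shows "z \<notin> interior C"
proof
  assume zi: "z \<in> interior C"
  have "openin (top_of_set (sphere 0 1)) (sphere 0 1 \<inter> interior C)" by auto
  moreover have "sphere 0 1 \<inter> interior C \<subseteq> HH" unfolding HH_def using interior_subset by auto
  ultimately have "sphere 0 1 \<inter> interior C \<subseteq> top_of_set (sphere 0 1) interior_of HH"
    using interior_of_maximal by blast
  moreover have "z \<in> sphere 0 1" using assms BD_sub HH_def by auto
  ultimately show False using zi assms unfolding BD_def frontier_of_def by auto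
qed

lemma sgn_close:
  assumes "norm y = 1" "w \<noteq> 0"
  shows "norm (sgn w - y) \<le> 2 * norm (w - y)"
proof -
  have "sgn w - y = (sgn w - w) + (w - y)" by simp
  then have "norm (sgn w - y) \<le> norm (sgn w - w) + norm (w - y)" by (metis norm_triangle_ineq)
  moreover have "sgn w - w = (1 - norm w) *\<^sub>R sgn w"
    using assms by (simp add: sgn_div_norm algebra_simps divide_inverse)
  then have "norm (sgn w - w) = \<bar>1 - norm w\<bar>" using assms by (simp add: norm_sgn)
  moreover have "\<bar>1 - norm w\<bar> \<le> norm (w - y)"
    using assms norm_triangle_ineq3[of y w] by (simp add: norm_minus_commute)
  ultimately show ?thesis by linarith
qed

lemma BD_supp:
  assumes "z \<in> HH" "m \<noteq> 0" "m \<bullet> z = 0" "\<And>c. c \<in> C \<Longrightarrow> m \<bullet> c \<ge> 0"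
  shows "z \<in> BD"
proof -
  have "z \<in> top_of_set (sphere 0 1) closure_of HH"
    using assms(1) closure_of_closedin[OF HH_closedin] by simp
  moreover have "z \<notin> top_of_set (sphere 0 1) interior_of HH"
  proof
    assume "z \<in> top_of_set (sphere 0 1) interior_of HH"
    then obtain T where T: "openin (top_of_set (sphere 0 1)) T" "z \<in> T" "T \<subseteq> HH"
      unfolding interior_of_def by auto
    then obtain V where V: "open V" "T = V \<inter> sphere 0 1" by (auto simp: openin_open)
    then obtain r where r: "r > 0" "ball z r \<subseteq> V" using T open_contains_ball by blast
    define w where "w = z - (r / 4 / norm m) *\<^sub>R m"
    have mw: "m \<bullet> w < 0"
      using assms r by (simp add: w_def inner_diff_right power2_norm_eq_inner[symmetric] power2_eq_square)
    then have wnz: "w \<noteq> 0" by auto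
    have nz: "norm z = 1" using assms HH_def by auto
    have "norm (w - z) = r / 4" using assms r by (simp add: w_def)
    then have "norm (sgn w - z) \<le> r / 2" using sgn_close[OF nz wnz] by simp
    then have "sgn w \<in> ball z r" using r by (simp add: dist_norm norm_minus_commute)
    then have "sgn w \<in> T" using V r wnz by (auto simp: norm_sgn)
    then have "sgn w \<in> C" using T HH_def by auto
    then have "m \<bullet> sgn w \<ge> 0" using assms by simp
    moreover have "m \<bullet> sgn w = m \<bullet> w / norm w" by (simp add: sgn_div_norm divide_inverse mult.commute)
    moreover have "m \<bullet> w / norm w < 0" using mw wnz by (simp add: divide_neg_pos)
    ultimately show False by linarith
  qed
  ultimately show ?thesis unfolding BD_def frontier_of_def by auto
qed

end


lemma solve_comb:
  fixes z u v :: pt and A B c :: real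
  assumes "c \<noteq> 0" "c *\<^sub>R z = A *\<^sub>R u + B *\<^sub>R v"
  shows "z = (A / c) *\<^sub>R u + (B / c) *\<^sub>R v"
proof -
  have "c *\<^sub>R ((A / c) *\<^sub>R u + (B / c) *\<^sub>R v) = (c * (A / c)) *\<^sub>R u + (c * (B / c)) *\<^sub>R v"
    by (rule trans[OF scaleR_add_right], simp only: scaleR_scaleR)
  also have "\<dots> = A *\<^sub>R u + B *\<^sub>R v" using assms(1) by simp
  finally have e1: "c *\<^sub>R ((A / c) *\<^sub>R u + (B / c) *\<^sub>R v) = A *\<^sub>R u + B *\<^sub>R v" .
  have "c *\<^sub>R z = c *\<^sub>R ((A / c) *\<^sub>R u + (B / c) *\<^sub>R v)" using assms(2) e1 by simp
  then show ?thesis using assms(1) by simp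
qed

context conesetup
begin

lemma cross_lemma:
  assumes ab: "arc_ends p q"
    and yi: "y \<in> arc_interior (garc p q)" and yB: "y \<in> BD"
    and t0: "0 < t0" "t0 < 1"
    and z0i: "(1 - t0) *\<^sub>R y + t0 *\<^sub>R q \<in> interior C"
  shows "crosses_at (garc p q) BD y"
proof -
  define N where "N = p \<times> q"
  define z0 where "z0 = (1 - t0) *\<^sub>R y + t0 *\<^sub>R q"
  have Nnz: "N \<noteq> 0" using arc_ends_nz[OF ab] N_def by simp
  have yc: "norm y = 1" "N \<bullet> y = 0" "det3 p y N > 0" "det3 y q N > 0"
    using arc_interior_char[OF ab] yi N_def by auto
  have yC: "y \<in> C" using yB BD_sub HH_def by auto
  have yni: "y \<notin> interior C" using BD_notint yB by simp
  have Nq: "N \<bullet> q = 0" "N \<bullet> p = 0" using arc_perp N_def by auto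
  have Nz0: "N \<bullet> z0 = 0" by (simp add: z0_def inner_add_right yc Nq)
  have dpq: "det3 p q N > 0" using arc_det_pos[OF ab] N_def by simp
  have cyz0: "det3 y z0 N = t0 * det3 y q N" by (simp add: z0_def det3_lin det3_self)
  have cyz0p: "det3 y z0 N > 0" using cyz0 yc t0 by simp
  have z0I: "z0 \<in> interior C" using z0i z0_def by simp
  define K where "K = norm (z0 \<times> N)"
  define e0 where "e0 = det3 y z0 N / (K + 1)"
  have Kp: "K \<ge> 0" using K_def by simp
  have e0p: "e0 > 0" using cyz0p Kp e0_def by simp
  have e0K: "e0 * K < det3 y z0 N"
  proof -
    have "e0 * (K + 1) = det3 y z0 N" using Kp e0_def by simp
    then show ?thesis using e0p by (simp add: algebra_simps)
  qed
  have close: "det3 z z0 N > 0" if "norm (z - y) < e0" for z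
  proof -
    have "det3 z z0 N - det3 y z0 N = (z0 \<times> N) \<bullet> (z - y)"
      unfolding det3_def using cross_triple[of z z0 N] cross_triple[of y z0 N]
      by (simp add: inner_diff_right)
    moreover have "\<bar>(z0 \<times> N) \<bullet> (z - y)\<bar> \<le> K * norm (z - y)"
      unfolding K_def by (rule Cauchy_Schwarz_ineq2)
    moreover have "K * norm (z - y) \<le> K * e0" using that Kp by (simp add: mult_left_mono)
    ultimately show ?thesis using e0K by (simp add: algebra_simps abs_le_iff)
  qed
  have iso: "\<forall>z\<in>garc p q \<inter> BD. dist z y < e0 \<longrightarrow> z = y"
  proof (intro ballI impI)
    fix z assume zB: "z \<in> garc p q \<inter> BD" and dz: "dist z y < e0"
    show "z = y"
    proof (rule ccontr)
      assume zy: "z \<noteq> y"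
      have zc: "norm z = 1" "N \<bullet> z = 0" using zB garc_char[OF ab] N_def by auto
      have zC: "z \<in> C" using zB BD_sub HH_def by auto
      have zni: "z \<notin> interior C" using BD_notint zB by simp
      have c1: "det3 z z0 N > 0" using close dz by (simp add: dist_norm)
      show False
      proof (cases "det3 y z N \<ge> 0")
        case True
        have "det3 y z0 z = 0" by (rule coplanar[OF Nnz]) (use yc Nz0 zc in \<open>auto simp: inner_commute\<close>)
        then have e: "det3 y z0 N *\<^sub>R z = det3 z z0 N *\<^sub>R y + det3 y z N *\<^sub>R z0" by (rule cramer2)
        then have e2: "z = (det3 z z0 N / det3 y z0 N) *\<^sub>R y + (det3 y z N / det3 y z0 N) *\<^sub>R z0"
          using solve_comb[OF _ e] cyz0p by simp
        show False
        proof (cases "det3 y z N = 0")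
          case True
          then have "z = (det3 z z0 N / det3 y z0 N) *\<^sub>R y" using e2 by simp
          moreover have "det3 z z0 N / det3 y z0 N \<ge> 0" using c1 cyz0p by simp
          ultimately have "z = y" using unit_scale_eq[OF zc(1) yc(1)] by blast
          then show False using zy by simp
        next
          case False
          then have "det3 y z N / det3 y z0 N > 0" using \<open>det3 y z N \<ge> 0\<close> cyz0p by simp
          moreover have "det3 z z0 N / det3 y z0 N \<ge> 0" using c1 cyz0p by simp
          ultimately have "z \<in> interior C" using intseg[OF yC z0I] e2 by metis
          then show False using zni by simp
        qed
      next
        case False
        have "det3 z z0 y = 0" by (rule coplanar[OF Nnz]) (use yc Nz0 zc in \<open>auto simp: inner_commute\<close>)
        then have e: "det3 z z0 N *\<^sub>R y = det3 y z0 N *\<^sub>R z + det3 z y N *\<^sub>R z0" by (rule cramer2)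
        then have e2: "y = (det3 y z0 N / det3 z z0 N) *\<^sub>R z + (det3 z y N / det3 z z0 N) *\<^sub>R z0"
          using solve_comb[OF _ e] c1 by simp
        have "det3 z y N > 0" using False det3_swap12[of z y N] by simp
        then have "det3 z y N / det3 z z0 N > 0" using c1 by simp
        moreover have "det3 y z0 N / det3 z z0 N \<ge> 0" using c1 cyz0p by simp
        ultimately have "y \<in> interior C" using intseg[OF zC z0I] e2 by metis
        then show False using yni by simp
      qed
    qed
  qed
  have side: "\<exists>z\<in>BD. dist z y < e \<and> \<sigma> * (N \<bullet> z) > 0" if ep: "e > 0" and sg: "\<sigma> = 1 \<or> \<sigma> = -1" for e \<sigma>
  proof -
    define t where "t = min (t0 / 2) (e / 8)"
    have tp: "0 < t" "t < t0" "t \<le> e / 8" "t < 1" using t0 ep by (auto simp: t_def)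
    define z1 where "z1 = (1 - t) *\<^sub>R y + t *\<^sub>R q"
    define z2 where "z2 = (1 - t) *\<^sub>R y + t *\<^sub>R p"
    have z1e: "z1 = (1 - t / t0) *\<^sub>R y + (t / t0) *\<^sub>R z0"
      using t0 by (simp add: z1_def z0_def algebra_simps)
    have z1I: "z1 \<in> interior C"
      using intseg[OF yC z0I, of "1 - t / t0" "t / t0"] z1e tp t0 by simp
    have Nz1: "N \<bullet> z1 = 0" "N \<bullet> z2 = 0" by (simp_all add: z1_def z2_def inner_add_right yc Nq)
    have z2C: "z2 \<notin> C"
    proof
      assume z2C: "z2 \<in> C"
      have c2: "det3 z2 z0 N > 0"
      proof -
        have "det3 z2 z0 N = (1 - t) * t0 * det3 y q N + t * (1 - t0) * det3 p y N + t * t0 * det3 p q N"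
          by (simp add: z2_def z0_def det3_lin det3_self algebra_simps)
        moreover have "(1 - t) * t0 * det3 y q N \<ge> 0" using tp t0 yc by simp
        moreover have "t * (1 - t0) * det3 p y N \<ge> 0" using tp t0 yc by simp
        moreover have "t * t0 * det3 p q N > 0" using tp t0 dpq by simp
        ultimately show ?thesis by linarith
      qed
      have c3: "det3 z2 y N > 0" using tp yc by (simp add: z2_def det3_lin det3_self)
      have "det3 z2 z0 y = 0" by (rule coplanar[OF Nnz]) (use yc Nz0 Nz1 in \<open>auto simp: inner_commute\<close>)
      then have "det3 z2 z0 N *\<^sub>R y = det3 y z0 N *\<^sub>R z2 + det3 z2 y N *\<^sub>R z0" by (rule cramer2)
      then have e2: "y = (det3 y z0 N / det3 z2 z0 N) *\<^sub>R z2 + (det3 z2 y N / det3 z2 z0 N) *\<^sub>R z0"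
        using solve_comb[OF _ \<open>det3 z2 z0 N *\<^sub>R y = _\<close>] c2 by simp
      have "(det3 y z0 N / det3 z2 z0 N) *\<^sub>R z2 + (det3 z2 y N / det3 z2 z0 N) *\<^sub>R z0 \<in> interior C"
        by (rule intseg[OF z2C z0I]) (use c2 c3 cyz0p in auto)
      then have "y \<in> interior C" using e2 by metis
      then show False using yni by simp
    qed
    have nq: "norm q = 1" "norm p = 1" using ab arc_ends_def by auto
    have d1: "norm (z1 - y) \<le> 2 * t"
    proof -
      have "z1 - y = t *\<^sub>R (q - y)" by (simp add: z1_def algebra_simps)
      moreover have "norm (q - y) \<le> 2" using norm_triangle_ineq4[of q y] nq yc by simp
      ultimately show ?thesis using tp by (simp add: mult_left_mono)
    qed
    have d2: "norm (z2 - y) \<le> 2 * t"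
    proof -
      have "z2 - y = t *\<^sub>R (p - y)" by (simp add: z2_def algebra_simps)
      moreover have "norm (p - y) \<le> 2" using norm_triangle_ineq4[of p y] nq yc by simp
      ultimately show ?thesis using tp by (simp add: mult_left_mono)
    qed
    obtain r1 where r1: "r1 > 0" "ball z1 r1 \<subseteq> interior C"
      using z1I open_interior open_contains_ball by blast
    obtain r2 where r2: "r2 > 0" "ball z2 r2 \<subseteq> - C"
      using z2C clC open_contains_ball[of "- C"] by (auto simp: open_Compl)
    define d where "d = min (min r1 r2) (e / 8) / 2"
    have dp: "d > 0" "d < r1" "d < r2" "d \<le> e / 16" using r1 r2 ep by (auto simp: d_def)
    define \<delta> where "\<delta> = \<sigma> * d / norm N"
    have sq: "\<sigma> * \<sigma> = 1" "\<bar>\<sigma>\<bar> = 1" using sg by auto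
    have nd: "norm (\<delta> *\<^sub>R N) = d" using Nnz dp sq by (simp add: \<delta>_def abs_mult)
    define a1 where "a1 = z1 + \<delta> *\<^sub>R N"
    define a2 where "a2 = z2 + \<delta> *\<^sub>R N"
    have a1C: "a1 \<in> C"
    proof -
      have "a1 \<in> ball z1 r1" using nd dp by (simp add: a1_def dist_norm)
      then show ?thesis using r1 interior_subset by blast
    qed
    have a2C: "a2 \<notin> C"
    proof -
      have "a2 \<in> ball z2 r2" using nd dp by (simp add: a2_def dist_norm)
      then show ?thesis using r2 by blast
    qed
    define w where "w = (\<lambda>s::real. (1 - s) *\<^sub>R a1 + s *\<^sub>R a2)"
    have Nw: "N \<bullet> w s = \<delta> * (N \<bullet> N)" for s
      by (simp add: w_def a1_def a2_def inner_add_right Nz1 algebra_simps)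
    have sNw: "\<sigma> * (N \<bullet> w s) > 0" for s
    proof -
      have "\<sigma> * (N \<bullet> w s) = (\<sigma> * \<sigma>) * d * norm N"
        using Nnz by (simp add: Nw \<delta>_def power2_norm_eq_inner[symmetric] power2_eq_square)
      then show ?thesis using sq dp Nnz by simp
    qed
    have wnz: "w s \<noteq> 0" for s using sNw[of s] by auto
    have na1: "norm (a1 - y) \<le> 2 * t + d"
      using d1 nd norm_triangle_ineq[of "z1 - y" "\<delta> *\<^sub>R N"] by (simp add: a1_def algebra_simps)
    have na2: "norm (a2 - y) \<le> 2 * t + d"
      using d2 nd norm_triangle_ineq[of "z2 - y" "\<delta> *\<^sub>R N"] by (simp add: a2_def algebra_simps)
    have nw: "norm (w s - y) < e / 2" if "s \<in> {0..1}" for s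
    proof -
      have "w s - y = (1 - s) *\<^sub>R (a1 - y) + s *\<^sub>R (a2 - y)" by (simp add: w_def algebra_simps)
      then have "norm (w s - y) \<le> (1 - s) * norm (a1 - y) + s * norm (a2 - y)"
        using that norm_triangle_ineq[of "(1 - s) *\<^sub>R (a1 - y)" "s *\<^sub>R (a2 - y)"] by simp
      also have "\<dots> \<le> (1 - s) * (2 * t + d) + s * (2 * t + d)"
        using that na1 na2 by (intro add_mono mult_left_mono) auto
      also have "\<dots> = 2 * t + d" by (simp add: algebra_simps)
      finally show ?thesis using tp dp ep by linarith
    qed
    define g where "g = (\<lambda>s. sgn (w s))"
    have gc: "continuous_on {0..1} g"
      unfolding g_def w_def by (intro continuous_intros) (use wnz w_def in auto)
    have gS: "g ` {0..1} \<subseteq> sphere 0 1" using wnz by (auto simp: g_def norm_sgn)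
    have conn: "connectedin (top_of_set (sphere 0 1)) (g ` {0..1})"
      using gS connected_continuous_image[OF gc] by (simp add: connectedin_subtopology)
    have g0: "g 0 \<in> HH" using a1C wnz[of 0] by (simp add: g_def w_def HH_def sgnC norm_sgn)
    have g1: "g 1 \<notin> HH"
    proof
      assume "g 1 \<in> HH"
      then have "sgn a2 \<in> C" by (simp add: g_def w_def HH_def)
      then have "norm a2 *\<^sub>R sgn a2 \<in> C" using scaleC by simp
      moreover have "a2 \<noteq> 0" using a2C zeroC by auto
      ultimately show False using a2C by (simp add: sgn_div_norm)
    qed
    have i1: "g ` {0..1} \<inter> HH \<noteq> {}" using g0 by (metis IntI atLeastAtMost_iff empty_iff image_eqI order_refl zero_le_one)
    have i2: "g ` {0..1} - HH \<noteq> {}" using g1 by (metis DiffI atLeastAtMost_iff empty_iff image_eqI order_refl zero_le_one)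
    have "g ` {0..1} \<inter> BD \<noteq> {}"
      unfolding BD_def by (rule connectedin_Int_frontier_of[OF conn i1 i2])
    then obtain s where s: "s \<in> {0..1}" "g s \<in> BD" by blast
    have "dist (g s) y < e"
    proof -
      have "norm (g s - y) \<le> 2 * norm (w s - y)" unfolding g_def by (rule sgn_close[OF yc(1) wnz])
      then show ?thesis using nw[OF s(1)] by (simp add: dist_norm)
    qed
    moreover have "\<sigma> * (N \<bullet> g s) > 0"
    proof -
      have "\<sigma> * (N \<bullet> g s) = \<sigma> * (N \<bullet> w s) / norm (w s)"
        by (simp add: g_def sgn_div_norm divide_inverse mult.commute mult.left_commute)
      then show ?thesis using sNw[of s] wnz[of s] by simp
    qed
    ultimately show ?thesis using s by blast
  qed
  show ?thesis
    unfolding crosses_at_def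
  proof (intro conjI)
    show "y \<in> arc_interior (garc p q)" by (rule yi)
    show "y \<in> BD" by (rule yB)
    show "\<exists>e>0. \<forall>z\<in>garc p q \<inter> BD. dist z y < e \<longrightarrow> z = y" using iso e0p by blast
    show "\<exists>n. n \<noteq> 0 \<and> (\<forall>z\<in>garc p q. n \<bullet> z = 0) \<and>
      (\<forall>e>0. (\<exists>z\<in>BD. dist z y < e \<and> 0 < n \<bullet> z) \<and> (\<exists>z\<in>BD. dist z y < e \<and> n \<bullet> z < 0))"
    proof (intro exI[of _ N] conjI allI impI ballI)
      show "N \<noteq> 0" by (rule Nnz)
      show "N \<bullet> z = 0" if "z \<in> garc p q" for z using that garc_char[OF ab] N_def by auto
      fix e :: real assume "e > 0"
      show "\<exists>z\<in>BD. dist z y < e \<and> 0 < N \<bullet> z" using side[OF \<open>e > 0\<close>, of 1] by simp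
      show "\<exists>z\<in>BD. dist z y < e \<and> N \<bullet> z < 0" using side[OF \<open>e > 0\<close>, of "-1"] by simp
    qed
  qed
qed

end


lemma small_t:
  fixes A1 A2 B1 B2 :: real
  assumes "A1 > 0" "A2 > 0"
  obtains t where "0 < t" "t < 1" "(1 - t) * A1 + t * B1 > 0" "(1 - t) * A2 + t * B2 > 0"
proof -
  define m where "m = min A1 A2"
  have mp: "m > 0" "m \<le> A1" "m \<le> A2" using assms by (auto simp: m_def)
  define t where "t = m / (2 * (m + \<bar>B1\<bar> + \<bar>B2\<bar>))"
  have den: "m + \<bar>B1\<bar> + \<bar>B2\<bar> > 0" using mp by simp
  have tp: "t > 0" using mp den by (simp add: t_def)
  have tm: "t * (m + \<bar>B1\<bar> + \<bar>B2\<bar>) = m / 2"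
  proof -
    have "t * (m + \<bar>B1\<bar> + \<bar>B2\<bar>) = (m * (m + \<bar>B1\<bar> + \<bar>B2\<bar>)) / (2 * (m + \<bar>B1\<bar> + \<bar>B2\<bar>))"
      by (simp add: t_def)
    also have "\<dots> = m / 2" using den by (simp add: field_simps)
    finally show ?thesis .
  qed
  have t1: "t \<le> 1 / 2"
  proof -
    have "m \<le> m + \<bar>B1\<bar> + \<bar>B2\<bar>" by simp
    then show ?thesis using den mp by (simp add: t_def divide_simps)
  qed
  have "(1 - t) * A1 + t * B1 \<ge> (1 - t) * m - t * \<bar>B1\<bar>"
  proof -
    have "(1 - t) * A1 \<ge> (1 - t) * m" using t1 mp by (intro mult_left_mono) auto
    moreover have "t * B1 \<ge> - (t * \<bar>B1\<bar>)"
    proof -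
      have "B1 + \<bar>B1\<bar> \<ge> 0" by simp
      then have "t * (B1 + \<bar>B1\<bar>) \<ge> 0" using tp by simp
      then show ?thesis by (simp add: algebra_simps)
    qed
    ultimately show ?thesis by linarith
  qed
  moreover have "(1 - t) * m - t * \<bar>B1\<bar> \<ge> m / 2"
  proof -
    have "t * m + t * \<bar>B1\<bar> + t * \<bar>B2\<bar> = m / 2" using tm by (simp add: algebra_simps)
    moreover have "t * \<bar>B2\<bar> \<ge> 0" using tp by simp
    moreover have "(1 - t) * m = m - t * m" by (simp add: algebra_simps)
    ultimately show ?thesis by linarith
  qed
  moreover have "(1 - t) * A2 + t * B2 \<ge> (1 - t) * m - t * \<bar>B2\<bar>"
  proof -
    have "(1 - t) * A2 \<ge> (1 - t) * m" using t1 mp by (intro mult_left_mono) auto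
    moreover have "t * B2 \<ge> - (t * \<bar>B2\<bar>)"
    proof -
      have "B2 + \<bar>B2\<bar> \<ge> 0" by simp
      then have "t * (B2 + \<bar>B2\<bar>) \<ge> 0" using tp by simp
      then show ?thesis by (simp add: algebra_simps)
    qed
    ultimately show ?thesis by linarith
  qed
  moreover have "(1 - t) * m - t * \<bar>B2\<bar> \<ge> m / 2"
  proof -
    have "t * m + t * \<bar>B1\<bar> + t * \<bar>B2\<bar> = m / 2" using tm by (simp add: algebra_simps)
    moreover have "t * \<bar>B1\<bar> \<ge> 0" using tp by simp
    moreover have "(1 - t) * m = m - t * m" by (simp add: algebra_simps)
    ultimately show ?thesis by linarith
  qed
  ultimately show ?thesis using that[of t] tp t1 mp by linarith
qed

lemma solve_comb3:
  fixes z u v w :: pt and A B D c :: real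
  assumes "c \<noteq> 0" "c *\<^sub>R z = A *\<^sub>R u + B *\<^sub>R v + D *\<^sub>R w"
  shows "z = (A / c) *\<^sub>R u + (B / c) *\<^sub>R v + (D / c) *\<^sub>R w"
proof -
  have "c *\<^sub>R ((A / c) *\<^sub>R u + (B / c) *\<^sub>R v + (D / c) *\<^sub>R w) = (c * (A / c)) *\<^sub>R u + (c * (B / c)) *\<^sub>R v + (c * (D / c)) *\<^sub>R w"
    by (simp only: scaleR_add_right scaleR_scaleR)
  also have "\<dots> = A *\<^sub>R u + B *\<^sub>R v + D *\<^sub>R w" using assms(1) by simp
  finally have e1: "c *\<^sub>R ((A / c) *\<^sub>R u + (B / c) *\<^sub>R v + (D / c) *\<^sub>R w) = A *\<^sub>R u + B *\<^sub>R v + D *\<^sub>R w" .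
  have "c *\<^sub>R z = c *\<^sub>R ((A / c) *\<^sub>R u + (B / c) *\<^sub>R v + (D / c) *\<^sub>R w)" using assms(2) e1 by simp
  then show ?thesis using assms(1) by simp
qed

lemma det3_sgn: "det3 u (sgn w) v = det3 u w v / norm w" "det3 (sgn w) u v = det3 w u v / norm w"
  by (simp_all add: sgn_div_norm det3_lin divide_inverse mult.commute)

lemma inner_sgn: "n \<bullet> sgn w = (n \<bullet> w) / norm w"
  by (simp add: sgn_div_norm divide_inverse mult.commute)

lemma overlap:
  assumes ab: "arc_ends p q" and ab': "arc_ends p' q'"
    and qi: "q \<in> arc_interior (garc p' q')"
    and pl: "(p \<times> q) \<bullet> p' = 0" "(p \<times> q) \<bullet> q' = 0"
  shows "\<exists>z. z \<in> arc_interior (garc p q) \<and> z \<in> arc_interior (garc p' q')"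
proof -
  define N where "N = p \<times> q"
  define N' where "N' = p' \<times> q'"
  have Nnz: "N \<noteq> 0" using arc_ends_nz[OF ab] N_def by simp
  have qc: "norm q = 1" "N' \<bullet> q = 0" "det3 p' q N' > 0" "det3 q q' N' > 0"
    using arc_interior_char[OF ab'] qi N'_def by auto
  have "det3 p' q' p = 0" by (rule coplanar[OF Nnz]) (use pl N_def arc_perp in \<open>auto simp: inner_commute\<close>)
  then have N'p: "N' \<bullet> p = 0" by (simp add: N'_def det3_def)
  have dpq: "det3 p q N > 0" using arc_det_pos[OF ab] N_def by simp
  obtain t where t: "0 < t" "t < 1"
    "(1 - t) * det3 p' q N' + t * det3 p' p N' > 0"
    "(1 - t) * det3 q q' N' + t * det3 p q' N' > 0"
    using small_t[OF qc(3) qc(4)] by metis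
  define w where "w = (1 - t) *\<^sub>R q + t *\<^sub>R p"
  have dw: "det3 p w N = (1 - t) * det3 p q N" by (simp add: w_def det3_lin det3_self)
  then have wnz: "w \<noteq> 0" using t dpq by (auto simp: det3_def)
  have nw: "norm w > 0" using wnz by simp
  define z where "z = sgn w"
  have zn: "norm z = 1" using wnz by (simp add: z_def norm_sgn)
  have "z \<in> arc_interior (garc p q)"
  proof -
    have "N \<bullet> z = 0" by (simp add: z_def inner_sgn w_def inner_add_right N_def arc_perp)
    moreover have "det3 p z N > 0" using dw t dpq nw by (simp add: z_def det3_sgn)
    moreover have "det3 z q N > 0"
    proof -
      have "det3 w q N = t * det3 p q N" by (simp add: w_def det3_lin det3_self)
      then show ?thesis using t dpq nw by (simp add: z_def det3_sgn)
    qed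
    ultimately show ?thesis using arc_interior_char[OF ab] zn N_def by simp
  qed
  moreover have "z \<in> arc_interior (garc p' q')"
  proof -
    have "N' \<bullet> z = 0" by (simp add: z_def inner_sgn w_def inner_add_right qc N'p)
    moreover have "det3 p' z N' > 0"
    proof -
      have "det3 p' w N' = (1 - t) * det3 p' q N' + t * det3 p' p N'" by (simp add: w_def det3_lin)
      then show ?thesis using t nw by (simp add: z_def det3_sgn)
    qed
    moreover have "det3 z q' N' > 0"
    proof -
      have "det3 w q' N' = (1 - t) * det3 q q' N' + t * det3 p q' N'" by (simp add: w_def det3_lin)
      then show ?thesis using t nw by (simp add: z_def det3_sgn)
    qed
    ultimately show ?thesis using arc_interior_char[OF ab'] zn N'_def by simp
  qed
  ultimately show ?thesis by blast
qed

lemma det_nz_plane: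
  assumes "N \<noteq> 0" "N \<bullet> x = 0" "N \<bullet> b = 0" "x \<times> b \<noteq> 0"
  shows "det3 x b N \<noteq> 0"
proof -
  have "N = (det3 x b N / (norm (x \<times> b))\<^sup>2) *\<^sub>R (x \<times> b)"
    by (rule perp_parallel) (use assms in \<open>auto simp: inner_commute\<close>)
  then show ?thesis using assms(1) by auto
qed

lemma not_collinear_aff_dim:
  assumes "x \<times> b \<noteq> 0"
  shows "aff_dim {0, x, b} \<ge> 2"
proof -
  have "\<not> collinear {0, x, b}" using assms by (simp add: cross_eq_0)
  then show ?thesis using collinear_aff_dim[of "{0, x, b}"] by simp
qed

context conesetup
begin

lemma arc_path:
  assumes "x \<in> garc p q" "y \<in> garc p q" "x \<in> C" "y \<in> C" "x \<noteq> - y"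
  shows "\<exists>g. path g \<and> path_image g \<subseteq> garc p q \<inter> HH \<and> pathstart g = x \<and> pathfinish g = y"
proof -
  have nx: "norm x = 1" "norm y = 1" using assms unfolding garc_def by auto
  define w where "w = (\<lambda>s::real. (1 - s) *\<^sub>R x + s *\<^sub>R y)"
  have wnz: "w s \<noteq> 0" if "s \<in> {0..1}" for s
  proof
    assume w0: "w s = 0"
    then have "(1 - s) *\<^sub>R x = - (s *\<^sub>R y)" by (simp add: w_def eq_neg_iff_add_eq_0)
    then have "norm ((1 - s) *\<^sub>R x) = norm (s *\<^sub>R y)" by (metis norm_minus_cancel)
    then have "1 - s = s" using that nx by simp
    then have sn: "s \<noteq> 0" by auto
    have "(1 - s) *\<^sub>R x + s *\<^sub>R y = s *\<^sub>R (x + y)" using \<open>1 - s = s\<close> by (simp add: scaleR_add_right)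
    then have "s *\<^sub>R (x + y) = 0" using w0 by (simp add: w_def)
    then have "x + y = 0" using sn by simp
    then have "x = - y" by (simp add: eq_neg_iff_add_eq_0)
    then show False using assms by simp
  qed
  define g where "g = (\<lambda>s. sgn (w s))"
  have "path g" unfolding path_def g_def w_def
    by (intro continuous_intros) (use wnz w_def in auto)
  moreover have "path_image g \<subseteq> garc p q \<inter> HH"
  proof
    fix z assume "z \<in> path_image g"
    then obtain s where s: "s \<in> {0..1}" "z = g s" by (auto simp: path_image_def)
    have "z \<in> garc p q" unfolding s g_def w_def
      by (rule garc_cone) (use assms s wnz w_def in auto)
    moreover have "z \<in> C" unfolding s g_def w_def using assms s by (intro sgnC combC) auto
    moreover have "norm z = 1" using wnz[OF s(1)] s by (simp add: g_def norm_sgn)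
    ultimately show "z \<in> garc p q \<inter> HH" by (simp add: HH_def)
  qed
  moreover have "pathstart g = x" "pathfinish g = y"
    using nx by (simp_all add: pathstart_def pathfinish_def g_def w_def sgn_div_norm)
  ultimately show ?thesis by blast
qed

lemma not_vertex:
  assumes "x \<in> C" "b \<in> C" "x \<times> b \<noteq> 0" "\<gamma> > 0" "\<delta> > 0"
  shows "\<not> (conic hull {\<gamma> *\<^sub>R x + \<delta> *\<^sub>R b}) face_of C"
proof
  define q where "q = \<gamma> *\<^sub>R x + \<delta> *\<^sub>R b"
  assume f: "conic hull {\<gamma> *\<^sub>R x + \<delta> *\<^sub>R b} face_of C"
  define s where "s = \<gamma> + \<delta>"
  have sp: "s > 0" using assms s_def by simp
  have xb: "x \<noteq> b" using assms by auto
  have "q \<in> open_segment (s *\<^sub>R x) (s *\<^sub>R b)"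
    unfolding in_segment
  proof (intro conjI exI[of _ "\<delta> / s"])
    show "s *\<^sub>R x \<noteq> s *\<^sub>R b" using xb sp by simp
    show "0 < \<delta> / s" "\<delta> / s < 1" using assms sp s_def by auto
    have h1: "(1 - \<delta> / s) * s = \<gamma>" "(\<delta> / s) * s = \<delta>" using sp s_def by (simp_all add: field_simps)
    show "q = (1 - \<delta> / s) *\<^sub>R s *\<^sub>R x + (\<delta> / s) *\<^sub>R s *\<^sub>R b"
      by (simp only: scaleR_scaleR h1 q_def)
  qed
  moreover have "s *\<^sub>R x \<in> C" "s *\<^sub>R b \<in> C" using assms sp scaleC by auto
  moreover have "q \<in> conic hull {q}" by (simp add: hull_inc)
  ultimately have "s *\<^sub>R x \<in> conic hull {q}" using face_ofD[OF f[folded q_def]] by blast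
  then obtain c where c: "c \<ge> 0" "s *\<^sub>R x = c *\<^sub>R q" by (auto simp: conic_hull_explicit)
  have "(s *\<^sub>R x) \<times> b = (c *\<^sub>R q) \<times> b" using c by simp
  then have "s *\<^sub>R (x \<times> b) = (c * \<gamma>) *\<^sub>R (x \<times> b)"
    by (simp add: q_def cross_add_left cross_mult_left)
  then have "s = c * \<gamma>" using assms(3) by (metis scaleR_cancel_right)
  have "x \<times> (s *\<^sub>R x) = x \<times> (c *\<^sub>R q)" using c by simp
  then have "0 = (c * \<delta>) *\<^sub>R (x \<times> b)"
    by (simp add: q_def cross_add_right cross_mult_right)
  then have "c * \<delta> = 0" using assms(3) by simp
  then have "c = 0" using assms by simp
  then show False using \<open>s = c * \<gamma>\<close> sp by simp
qed

lemma plane_face: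
  assumes "M \<noteq> 0" "\<And>c. c \<in> C \<Longrightarrow> M \<bullet> c \<ge> 0" "x \<in> C" "b \<in> C" "M \<bullet> x = 0" "M \<bullet> b = 0" "x \<times> b \<noteq> 0"
  shows "(C \<inter> {z. M \<bullet> z = 0}) face_of C" "aff_dim (C \<inter> {z. M \<bullet> z = 0}) = 2"
proof -
  show "(C \<inter> {z. M \<bullet> z = 0}) face_of C"
    using face_of_Int_supporting_hyperplane_ge[OF convC, where a=M and b=0] assms by auto
  have "aff_dim (C \<inter> {z. M \<bullet> z = 0}) \<le> aff_dim {z. M \<bullet> z = 0}" by (rule aff_dim_subset) auto
  also have "\<dots> = 2" using assms(1) by simp
  finally have le: "aff_dim (C \<inter> {z. M \<bullet> z = 0}) \<le> 2" .
  have "{0, x, b} \<subseteq> C \<inter> {z. M \<bullet> z = 0}" using assms zeroC by auto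
  then have "aff_dim {0, x, b} \<le> aff_dim (C \<inter> {z. M \<bullet> z = 0})" by (rule aff_dim_subset)
  then show "aff_dim (C \<inter> {z. M \<bullet> z = 0}) = 2" using le not_collinear_aff_dim[OF assms(7)] by simp
qed

lemma facet_through:
  assumes "polyhedron C" "x \<in> C" "x \<notin> interior C" "det3 x b c \<noteq> 0" "b \<in> C" "c \<in> C"
  shows "\<exists>F. F face_of C \<and> aff_dim F = 2 \<and> x \<in> F"
proof -
  have sp: "span C = UNIV"
  proof (rule set_eqI, rule iffI)
    fix v :: pt
    have "det3 x b c *\<^sub>R v = det3 v b c *\<^sub>R x + det3 x v c *\<^sub>R b + det3 x b v *\<^sub>R c" by (rule cramer)
    then have "v = (det3 v b c / det3 x b c) *\<^sub>R x + (det3 x v c / det3 x b c) *\<^sub>R b + (det3 x b v / det3 x b c) *\<^sub>R c"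
      using assms(4) solve_comb3 by blast
    moreover have "(det3 v b c / det3 x b c) *\<^sub>R x + (det3 x v c / det3 x b c) *\<^sub>R b + (det3 x b v / det3 x b c) *\<^sub>R c \<in> span C"
      using assms by (intro span_add span_mul span_base)
    ultimately show "v \<in> span C" by simp
  qed simp
  have "affine hull C = UNIV"
    using affine_hull_span_0[of C] sp zeroC hull_inc by metis
  then have ri: "rel_interior C = interior C" by (rule rel_interior_interior)
  have adim: "aff_dim C = 3" using \<open>affine hull C = UNIV\<close> aff_dim_eq_full[of C] by simp
  have "x \<in> rel_frontier C" unfolding rel_frontier_def using assms ri closure_subset by auto
  then obtain F where F: "F facet_of C" "x \<in> F" using rel_frontier_of_polyhedron[OF assms(1)] by auto
  then show ?thesis using adim unfolding facet_of_def by auto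
qed

end


lemma sd_arc:
  assumes "spherical_diagram D" "B \<in> D"
  obtains p q where "arc_ends p q" "B = garc p q"
proof -
  have "is_arc B" using assms unfolding spherical_diagram_def by simp
  then show ?thesis using that unfolding is_arc_def by blast
qed

lemma sd_disj:
  assumes "spherical_diagram D" "A \<in> D" "B \<in> D" "z \<in> arc_interior A" "z \<in> arc_interior B"
  shows "A = B"
proof (rule ccontr)
  assume "A \<noteq> B"
  have "\<forall>A\<in>D. \<forall>B\<in>D. A \<noteq> B \<longrightarrow> arc_interior A \<inter> arc_interior B = {}"
    using assms(1) unfolding spherical_diagram_def by simp
  then have "arc_interior A \<inter> arc_interior B = {}" using assms \<open>A \<noteq> B\<close> by simp
  then show False using assms by auto
qed

lemma sd_block:
  assumes "spherical_diagram D" "A \<in> D" "arc_endpoint A x"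
  obtains B where "B \<in> D" "x \<in> arc_interior B"
proof -
  have "\<forall>A\<in>D. \<forall>x. arc_endpoint A x \<longrightarrow> (\<exists>B\<in>D. x \<in> arc_interior B)"
    using assms(1) unfolding spherical_diagram_def by simp
  then show ?thesis using assms that by blast
qed

context conesetup
begin

definition poleprop :: "pt set set \<Rightarrow> bool" where
  "poleprop D \<longleftrightarrow> (\<forall>B\<in>D. \<exists>b. b \<in> C \<and> norm b = 1 \<and> b \<notin> B \<and> - b \<notin> B \<and>
      (\<forall>p q. arc_ends p q \<longrightarrow> B = garc p q \<longrightarrow> (p \<times> q) \<bullet> b = 0))"

definition goodres :: "pt set set \<Rightarrow> pt \<Rightarrow> bool" where
  "goodres D x \<longleftrightarrow> (\<exists>B'\<in>D. \<exists>y. crosses_at B' BD y \<and> R_connected D HH x y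
      \<and> (\<exists>F. F face_of C \<and> aff_dim F = 2 \<and> x \<in> F \<and> y \<in> F)
      \<and> (x \<noteq> y \<longrightarrow> \<not> (conic hull {y}) face_of C))"

lemma mfinish:
  assumes SD: "spherical_diagram D" and PP: "poleprop D"
    and BD: "garc p q \<in> D" and ab: "arc_ends p q" and xi: "x \<in> arc_interior (garc p q)"
    and qd: "q = \<gamma> *\<^sub>R x + \<delta> *\<^sub>R b" and gd: "\<gamma> > 0" "\<delta> > 0"
    and xC: "x \<in> C" and bC: "b \<in> C" and xb: "x \<times> b \<noteq> 0"
    and M: "M \<noteq> 0" "\<And>c. c \<in> C \<Longrightarrow> M \<bullet> c \<ge> 0" "M \<bullet> x = 0" "M \<bullet> b = 0"
    and B'D: "garc p' q' \<in> D" and ab': "arc_ends p' q'" and qi: "q \<in> arc_interior (garc p' q')"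
    and Mq': "M \<bullet> q' > 0"
  shows "goodres D x"
proof -
  define N' where "N' = p' \<times> q'"
  obtain b' where b': "b' \<in> C" "norm b' = 1" "b' \<notin> garc p' q'" "- b' \<notin> garc p' q'"
      "N' \<bullet> b' = 0"
    using PP B'D ab' unfolding poleprop_def N'_def by blast
  have qc: "norm q = 1" "N' \<bullet> q = 0" "det3 p' q N' > 0" "det3 q q' N' > 0"
    using arc_interior_char[OF ab'] qi N'_def by auto
  have qB': "q \<in> garc p' q'" using qi arc_interior_def by auto
  have qC: "q \<in> C" using qd xC bC gd by (simp add: combC)
  have Mq: "M \<bullet> q = 0" using qd M by (simp add: inner_add_right)
  have qb': "q \<times> b' \<noteq> 0"
    by (rule unit_cross_nz) (use qc b' qB' in auto)
  have N'nz: "N' \<noteq> 0" using arc_ends_nz[OF ab'] N'_def by simp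
  have N'q': "N' \<bullet> q' = 0" using arc_perp N'_def by simp
  have dqb: "det3 q b' N' \<noteq> 0" by (rule det_nz_plane) (use N'nz qc b' qb' in auto)
  have "det3 q b' q' = 0" by (rule coplanar[OF N'nz]) (use qc b' N'q' in \<open>auto simp: inner_commute\<close>)
  then have "det3 q b' N' *\<^sub>R q' = det3 q' b' N' *\<^sub>R q + det3 q q' N' *\<^sub>R b'" by (rule cramer2)
  then have q'd: "q' = (det3 q' b' N' / det3 q b' N') *\<^sub>R q + (det3 q q' N' / det3 q b' N') *\<^sub>R b'"
    using solve_comb[OF dqb] by blast
  define \<rho> where "\<rho> = det3 q' b' N' / det3 q b' N'"
  define \<tau> where "\<tau> = det3 q q' N' / det3 q b' N'"
  have q'd2: "q' = \<rho> *\<^sub>R q + \<tau> *\<^sub>R b'" using q'd \<rho>_def \<tau>_def by simp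
  have "M \<bullet> q' = \<tau> * (M \<bullet> b')" using q'd2 Mq by (simp add: inner_add_right)
  moreover have "M \<bullet> b' \<ge> 0" using M b' by simp
  ultimately have Mb': "M \<bullet> b' > 0" and tau: "\<tau> > 0" using Mq'
    by (auto simp: zero_less_mult_iff)
  obtain t where t: "0 < t" "t < 1" "(1 - t) * 1 + t * \<rho> > 0" "(1 - t) * 1 + t * 0 > 0"
    using small_t[of 1 1 \<rho> 0] by auto
  define \<kappa> where "\<kappa> = (1 - t) + t * \<rho>"
  have kp: "\<kappa> > 0" using t \<kappa>_def by simp
  have z0e: "(1 - t) *\<^sub>R q + t *\<^sub>R q' = (\<kappa> * \<gamma>) *\<^sub>R x + (\<kappa> * \<delta>) *\<^sub>R b + (t * \<tau>) *\<^sub>R b'"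
    by (simp add: q'd2 qd \<kappa>_def algebra_simps)
  have dxbb': "det3 x b b' \<noteq> 0"
  proof -
    have "M = (det3 x b M / (norm (x \<times> b))\<^sup>2) *\<^sub>R (x \<times> b)"
      by (rule perp_parallel) (use xb M in auto)
    then have "M \<bullet> b' = (det3 x b M / (norm (x \<times> b))\<^sup>2) * det3 x b b'"
      by (metis det3_def inner_scaleR_left)
    then show ?thesis using Mb' by auto
  qed
  have z0I: "(1 - t) *\<^sub>R q + t *\<^sub>R q' \<in> interior C"
    unfolding z0e by (rule int3[OF xC bC b'(1) dxbb']) (use kp gd t tau in auto)
  have qHH: "q \<in> HH" using qc qC by (simp add: HH_def)
  have qBD: "q \<in> BD" by (rule BD_supp[OF qHH M(1) Mq M(2)])
  have cr: "crosses_at (garc p' q') BD q" by (rule cross_lemma[OF ab' qi qBD t(1) t(2) z0I])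
  define N where "N = p \<times> q"
  have xc: "norm x = 1" "N \<bullet> x = 0" "det3 p x N > 0" "det3 x q N > 0"
    using arc_interior_char[OF ab] xi N_def by auto
  have xq: "x \<noteq> - q" using xc(4) by (auto simp: det3_def)
  have xB: "x \<in> garc p q" using xi arc_interior_def by auto
  have qB: "q \<in> garc p q" using garc_ends_mem ab arc_ends_def by auto
  obtain g where g: "path g" "path_image g \<subseteq> garc p q \<inter> HH" "pathstart g = x" "pathfinish g = q"
    using arc_path[OF xB qB xC qC xq] by blast
  have RC: "R_connected D HH x q"
    unfolding R_connected_def using g BD by (intro exI[of _ g]) auto
  have F: "(C \<inter> {z. M \<bullet> z = 0}) face_of C" "aff_dim (C \<inter> {z. M \<bullet> z = 0}) = 2"
    using plane_face[OF M(1) M(2) xC bC M(3) M(4) xb] by auto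
  have "x \<in> C \<inter> {z. M \<bullet> z = 0}" "q \<in> C \<inter> {z. M \<bullet> z = 0}" using xC M qC Mq by auto
  moreover have "\<not> (conic hull {q}) face_of C" using not_vertex[OF xC bC xb gd] qd by simp
  ultimately show ?thesis unfolding goodres_def using cr RC F B'D by blast
qed

lemma mcore:
  assumes SD: "spherical_diagram D" and PP: "poleprop D" and PH: "polyhedron C"
    and BD: "garc p q \<in> D" and ab: "arc_ends p q" and xi: "x \<in> arc_interior (garc p q)"
    and xBD: "x \<in> BD"
    and bC: "b \<in> C" and bn: "norm b = 1" "b \<notin> garc p q" "- b \<notin> garc p q" and Nb: "(p \<times> q) \<bullet> b = 0"
    and pos: "det3 x b (p \<times> q) > 0"
  shows "goodres D x"
proof -
  define N where "N = p \<times> q"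
  have Nnz: "N \<noteq> 0" using arc_ends_nz[OF ab] N_def by simp
  have xc: "norm x = 1" "N \<bullet> x = 0" "det3 p x N > 0" "det3 x q N > 0"
    using arc_interior_char[OF ab] xi N_def by auto
  have xC: "x \<in> C" using xBD BD_sub HH_def by auto
  have xni: "x \<notin> interior C" using BD_notint xBD by simp
  have xB: "x \<in> garc p q" using xi arc_interior_def by auto
  have qB: "q \<in> garc p q" "p \<in> garc p q" using garc_ends_mem ab arc_ends_def by auto
  have nq: "norm q = 1" "norm p = 1" using ab arc_ends_def by auto
  have Nq: "N \<bullet> q = 0" "N \<bullet> p = 0" "N \<bullet> b = 0" using arc_perp N_def Nb by auto
  have xb: "x \<times> b \<noteq> 0" by (rule unit_cross_nz) (use xc bn xB in auto)
  have qb: "q \<times> b \<noteq> 0" by (rule unit_cross_nz) (use nq bn qB in auto)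
  have cxb: "det3 x b N > 0" using pos N_def by simp
  have "det3 x b q = 0" by (rule coplanar[OF Nnz]) (use xc Nq in \<open>auto simp: inner_commute\<close>)
  then have "det3 x b N *\<^sub>R q = det3 q b N *\<^sub>R x + det3 x q N *\<^sub>R b" by (rule cramer2)
  then have qd0: "q = (det3 q b N / det3 x b N) *\<^sub>R x + (det3 x q N / det3 x b N) *\<^sub>R b"
    using solve_comb cxb by (metis less_irrefl)
  have dqb: "det3 q b N > 0"
  proof -
    have "det3 q b N \<noteq> 0" by (rule det_nz_plane) (use Nnz Nq qb in auto)
    moreover have "\<not> det3 q b N < 0"
    proof
      assume neg: "det3 q b N < 0"
      have dbq: "det3 b q N > 0" using neg det3_swap12[of b q N] by simp
      have "det3 x q b = 0" by (rule coplanar[OF Nnz]) (use xc Nq in \<open>auto simp: inner_commute\<close>)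
      then have "det3 x q N *\<^sub>R b = det3 b q N *\<^sub>R x + det3 x b N *\<^sub>R q" by (rule cramer2)
      then have bd: "b = (det3 b q N / det3 x q N) *\<^sub>R x + (det3 x b N / det3 x q N) *\<^sub>R q"
        using solve_comb xc(4) by (metis less_irrefl)
      have "sgn ((det3 b q N / det3 x q N) *\<^sub>R x + (det3 x b N / det3 x q N) *\<^sub>R q) \<in> garc p q"
        by (rule garc_cone[OF xB qB(1)]) (use dbq xc cxb bd bn in auto)
      then have "sgn b \<in> garc p q" using bd by simp
      moreover have "sgn b = b" using bn by (simp add: sgn_div_norm)
      ultimately show False using bn by simp
    qed
    ultimately show ?thesis by simp
  qed
  define \<gamma> where "\<gamma> = det3 q b N / det3 x b N"
  define \<delta> where "\<delta> = det3 x q N / det3 x b N"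
  have gd: "\<gamma> > 0" "\<delta> > 0" using dqb cxb xc by (simp_all add: \<gamma>_def \<delta>_def)
  have qd: "q = \<gamma> *\<^sub>R x + \<delta> *\<^sub>R b" using qd0 \<gamma>_def \<delta>_def by simp
  show ?thesis
  proof (cases "\<exists>c1\<in>C. \<exists>c2\<in>C. N \<bullet> c1 > 0 \<and> N \<bullet> c2 < 0")
    case True
    then obtain c1 c2 where c: "c1 \<in> C" "c2 \<in> C" "N \<bullet> c1 > 0" "N \<bullet> c2 < 0" by blast
    have z0: "(1 - 1/2) *\<^sub>R x + (1/2::real) *\<^sub>R q = (1/2 + \<gamma> / 2) *\<^sub>R x + (\<delta> / 2) *\<^sub>R b"
      by (simp add: qd algebra_simps)
    have z0I: "(1 - 1/2) *\<^sub>R x + (1/2::real) *\<^sub>R q \<in> interior C"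
      unfolding z0 by (rule intX[OF Nnz xC bC xc(2) Nq(3) xb c]) (use gd in auto)
    have cr: "crosses_at (garc p q) BD x" by (rule cross_lemma[OF ab xi xBD _ _ z0I]) auto
    have RC: "R_connected D HH x x"
      unfolding R_connected_def
      by (rule exI[of _ "\<lambda>_. x"]) (use xB xC xc BD in \<open>auto simp: path_def path_image_def pathstart_def pathfinish_def HH_def\<close>)
    have dxbc: "det3 x b c1 \<noteq> 0"
    proof -
      have "N = (det3 x b N / (norm (x \<times> b))\<^sup>2) *\<^sub>R (x \<times> b)"
        by (rule perp_parallel) (use xb xc Nq in auto)
      then have "N \<bullet> c1 = (det3 x b N / (norm (x \<times> b))\<^sup>2) * det3 x b c1"
        by (metis det3_def inner_scaleR_left)
      then show ?thesis using c by auto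
    qed
    obtain F where F: "F face_of C" "aff_dim F = 2" "x \<in> F"
      using facet_through[OF PH xC xni dxbc bC c(1)] by blast
    show ?thesis unfolding goodres_def using cr RC F BD by blast
  next
    case False
    then have "(\<forall>c\<in>C. N \<bullet> c \<ge> 0) \<or> (\<forall>c\<in>C. (- N) \<bullet> c \<ge> 0)"
      by (auto simp: not_less)
    then obtain M where M: "M = N \<or> M = - N" "\<And>c. c \<in> C \<Longrightarrow> M \<bullet> c \<ge> 0" by blast
    have Mnz: "M \<noteq> 0" using M Nnz by auto
    have Mx: "M \<bullet> x = 0" "M \<bullet> b = 0" "M \<bullet> q = 0" using M xc Nq by auto
    have "arc_endpoint (garc p q) q" using arc_endpoint_garc[OF ab] by simp
    then obtain B' where B': "B' \<in> D" "q \<in> arc_interior B'"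
      using sd_block[OF SD BD] by blast
    then obtain p' q' where pq': "arc_ends p' q'" "B' = garc p' q'"
      using sd_arc[OF SD] by blast
    define N' where "N' = p' \<times> q'"
    have qi: "q \<in> arc_interior (garc p' q')" using B' pq' by simp
    have qc: "norm q = 1" "N' \<bullet> q = 0" "det3 p' q N' > 0" "det3 q q' N' > 0"
      using arc_interior_char[OF pq'(1)] qi N'_def by auto
    have dpq': "det3 p' q' N' > 0" using arc_det_pos[OF pq'(1)] N'_def by simp
    have "q = (det3 q q' N' / det3 p' q' N') *\<^sub>R p' + (det3 p' q N' / det3 p' q' N') *\<^sub>R q'"
      using plane_decomp[OF pq'(1)] qc N'_def by simp
    then have "M \<bullet> q = (det3 q q' N' / det3 p' q' N') * (M \<bullet> p') + (det3 p' q N' / det3 p' q' N') * (M \<bullet> q')"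
      by (metis inner_add_right inner_scaleR_right)
    then have sum0: "(det3 q q' N' / det3 p' q' N') * (M \<bullet> p') + (det3 p' q N' / det3 p' q' N') * (M \<bullet> q') = 0"
      using Mx by simp
    have c1p: "det3 q q' N' / det3 p' q' N' > 0" "det3 p' q N' / det3 p' q' N' > 0"
      using qc dpq' by auto
    show ?thesis
    proof (cases "M \<bullet> p' = 0 \<and> M \<bullet> q' = 0")
      case True
      then have "N \<bullet> p' = 0" "N \<bullet> q' = 0" using M by auto
      then obtain z where z: "z \<in> arc_interior (garc p q)" "z \<in> arc_interior (garc p' q')"
        using overlap[OF ab pq'(1) qi] N_def by auto
      have "garc p q = B'"
        using sd_disj[OF SD BD B'(1)] pq' z by simp
      then have "q \<in> arc_interior (garc p q)" using B' by simp
      then show ?thesis using arc_interior_garc[OF ab] by simp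
    next
      case False
      have "M \<bullet> q' > 0 \<or> M \<bullet> p' > 0"
      proof (rule ccontr)
        assume "\<not> (M \<bullet> q' > 0 \<or> M \<bullet> p' > 0)"
        then have le: "M \<bullet> q' \<le> 0" "M \<bullet> p' \<le> 0" by auto
        have "(det3 q q' N' / det3 p' q' N') * (M \<bullet> p') \<le> 0" "(det3 p' q N' / det3 p' q' N') * (M \<bullet> q') \<le> 0"
          using le c1p by (meson less_imp_le mult_nonneg_nonpos)+
        then have "(det3 q q' N' / det3 p' q' N') * (M \<bullet> p') = 0" "(det3 p' q N' / det3 p' q' N') * (M \<bullet> q') = 0"
          using sum0 by linarith+
        then have "M \<bullet> p' = 0" "M \<bullet> q' = 0" using c1p by auto
        then show False using False by simp
      qed
      then show ?thesis
      proof
        assume "M \<bullet> q' > 0"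
        show ?thesis
          by (rule mfinish[OF SD PP BD ab xi qd gd xC bC xb Mnz M(2) Mx(1) Mx(2) _ pq'(1) qi \<open>M \<bullet> q' > 0\<close>])
            (use B' pq' in auto)
      next
        assume "M \<bullet> p' > 0"
        have qi2: "q \<in> arc_interior (garc q' p')" using qi arc_interior_sym by metis
        show ?thesis
          by (rule mfinish[OF SD PP BD ab xi qd gd xC bC xb Mnz M(2) Mx(1) Mx(2) _ arc_ends_sym[OF pq'(1)] qi2 \<open>M \<bullet> p' > 0\<close>])
            (use B' pq' garc_sym[of q' p'] in auto)
      qed
    qed
  qed
qed

lemma mprime:
  assumes SD: "spherical_diagram D" and PP: "poleprop D" and PH: "polyhedron C"
    and BD: "B \<in> D" and xi: "x \<in> arc_interior B" and xBD: "x \<in> BD"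
  shows "goodres D x"
proof -
  obtain p q where pq: "arc_ends p q" "B = garc p q"
    using sd_arc[OF SD BD] by blast
  obtain b where b: "b \<in> C" "norm b = 1" "b \<notin> B" "- b \<notin> B" "(p \<times> q) \<bullet> b = 0"
    using PP BD pq unfolding poleprop_def by blast
  define N where "N = p \<times> q"
  have Nnz: "N \<noteq> 0" using arc_ends_nz[OF pq(1)] N_def by simp
  have xi': "x \<in> arc_interior (garc p q)" using xi pq by simp
  have xc: "norm x = 1" "N \<bullet> x = 0" using arc_interior_char[OF pq(1)] xi' N_def by auto
  have xB: "x \<in> B" using xi arc_interior_def by auto
  have xb: "x \<times> b \<noteq> 0" by (rule unit_cross_nz) (use xc b xB in auto)
  have "det3 x b N \<noteq> 0" by (rule det_nz_plane) (use Nnz xc b xb N_def in auto)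
  then consider "det3 x b N > 0" | "det3 x b N < 0" by linarith
  then show ?thesis
  proof cases
    case 1
    show ?thesis by (rule mcore[OF SD PP PH _ pq(1) xi' xBD b(1) b(2)]) (use BD pq b 1 N_def in auto)
  next
    case 2
    have qp: "q \<times> p = - N" using N_def cross_skew by metis
    have xi2: "x \<in> arc_interior (garc q p)" using xi' arc_interior_sym by metis
    show ?thesis
      by (rule mcore[OF SD PP PH _ arc_ends_sym[OF pq(1)] xi2 xBD b(1) b(2)])
        (use BD pq b 2 N_def qp garc_sym in \<open>auto simp: det3_lin\<close>)
  qed
qed

lemma mmain:
  assumes SD: "spherical_diagram D" and PP: "poleprop D" and PH: "polyhedron C"
    and AD: "A \<in> D" and xA: "x \<in> A" and xBD: "x \<in> BD"
  shows "goodres D x"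
proof (cases "x \<in> arc_interior A")
  case True
  then show ?thesis using mprime[OF SD PP PH AD _ xBD] by simp
next
  case False
  then have "arc_endpoint A x" using xA arc_interior_def by auto
  then obtain B where "B \<in> D" "x \<in> arc_interior B" using sd_block[OF SD AD] by blast
  then show ?thesis using mprime[OF SD PP PH _ _ xBD] by blast
qed

end


lemma att_pm:
  assumes "attractor P Att" "finite P" "\<forall>p\<in>P. - p \<notin> P" "p \<in> P"
  shows "p \<in> Att \<or> - p \<in> Att"
proof -
  define g where "g = (\<lambda>a::pt. if a \<in> P then a else - a)"
  have fa: "finite Att" "Att \<subseteq> P \<union> uminus ` P" "card Att = card P" "\<forall>a\<in>Att. - a \<notin> Att"
    using assms(1) unfolding attractor_def by auto
  have gP: "g ` Att \<subseteq> P"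
  proof
    fix z assume "z \<in> g ` Att"
    then obtain a where a: "a \<in> Att" "z = g a" by auto
    show "z \<in> P"
    proof (cases "a \<in> P")
      case True then show ?thesis using a g_def by simp
    next
      case False
      then have "a \<in> uminus ` P" using fa a by auto
      then have "- a \<in> P" by auto
      then show ?thesis using a g_def False by simp
    qed
  qed
  have inj: "inj_on g Att"
  proof (rule inj_onI)
    fix a a' assume aa: "a \<in> Att" "a' \<in> Att" "g a = g a'"
    show "a = a'"
    proof (cases "a \<in> P"; cases "a' \<in> P")
      assume "a \<in> P" "a' \<in> P" then show ?thesis using aa g_def by simp
    next
      assume "a \<in> P" "a' \<notin> P"
      then have "a = - a'" using aa g_def by simp
      then show ?thesis using aa fa by auto
    next
      assume "a \<notin> P" "a' \<in> P"
      then have "- a = a'" using aa g_def by simp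
      then show ?thesis using aa fa by auto
    next
      assume "a \<notin> P" "a' \<notin> P"
      then show ?thesis using aa g_def by simp
    qed
  qed
  have "card (g ` Att) = card P" using card_image[OF inj] fa by simp
  then have "g ` Att = P" using card_subset_eq[OF assms(2) gP] by simp
  then obtain a where a: "a \<in> Att" "p = g a" using assms(4) by auto
  then show ?thesis by (cases "a \<in> P") (auto simp: g_def)
qed

context conesetup
begin

lemma conic_hull_HH:
  assumes "u \<in> C" "u \<noteq> 0"
  shows "conic hull HH = C"
proof
  show "conic hull HH \<subseteq> C" by (rule hull_minimal) (use conC in \<open>auto simp: HH_def\<close>)
  show "C \<subseteq> conic hull HH"
  proof
    fix z assume zC: "z \<in> C"
    have sH: "sgn v \<in> HH" if "v \<in> C" "v \<noteq> 0" for v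
      using that sgnC by (simp add: HH_def norm_sgn)
    show "z \<in> conic hull HH"
    proof (cases "z = 0")
      case True
      have "HH \<noteq> {}" using sH[OF assms] by auto
      then show ?thesis using True by simp
    next
      case False
      have "norm z *\<^sub>R sgn z \<in> conic hull HH"
        by (rule conic_mul[OF conic_conic_hull]) (use sH[OF zC False] hull_inc in auto)
      then show ?thesis by (simp add: sgn_div_norm False)
    qed
  qed
qed

end

theorem mainTheorem15:
  fixes D :: "pt set set" and k :: nat and P :: "pt set" and f :: "pt set \<Rightarrow> pt"
    and Att :: "pt set" and A :: "pt set" and x :: pt
  assumes "spherical_diagram D"
    and "k_orientation D k P f"
    and "attractor P Att"
    and "A \<in> D" and "x \<in> A" and "x \<in> sph_boundary (attractor_hull Att)"
  shows "\<exists>B\<in>D. \<exists>y. crosses_at B (sph_boundary (attractor_hull Att)) y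
           \<and> R_connected D (attractor_hull Att) x y
           \<and> (\<exists>E. sph_edge (attractor_hull Att) E \<and> x \<in> E \<and> y \<in> E)
           \<and> (x \<noteq> y \<longrightarrow> \<not> sph_vertex (attractor_hull Att) y)"
proof (cases "in_open_hemisphere Att")
  case False
  then have "attractor_hull Att = topspace (top_of_set (sphere (0::pt) 1))"
    by (simp add: attractor_hull_def)
  then have "sph_boundary (attractor_hull Att) = {}"
    unfolding sph_boundary_def by (metis frontier_of_topspace)
  then show ?thesis using assms(6) by simp
next
  case True
  note SD = assms(1)
  have KO: "finite P" "P \<subseteq> sphere 0 1" "\<forall>p\<in>P. - p \<notin> P"
      "\<And>B. B \<in> D \<Longrightarrow> f B \<in> P \<and> (\<exists>n. n \<noteq> 0 \<and> n \<bullet> f B = 0 \<and> (\<forall>x\<in>B. n \<bullet> x = 0)) \<and> f B \<notin> B \<and> - f B \<notin> B"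
    using assms(2) unfolding k_orientation_def by auto
  have AttP: "finite Att" "Att \<subseteq> P \<union> uminus ` P"
    using assms(3) unfolding attractor_def by auto
  define C where "C = conic hull (convex hull Att)"
  have AttC: "Att \<subseteq> C" unfolding C_def by (meson hull_subset subset_trans)
  have Attn: "norm a = 1" if "a \<in> Att" for a
  proof -
    have "a \<in> P \<or> - a \<in> P" using that AttP by auto
    then show ?thesis using KO(2) by (metis mem_sphere_0 norm_minus_cancel subsetD)
  qed
  have "f A \<in> P" using KO(4) assms(4) by blast
  then obtain a0 where a0: "a0 \<in> Att" using att_pm[OF assms(3) KO(1) KO(3)] by blast
  have PH: "polyhedron C" unfolding C_def
    by (rule polyhedron_conic_hull_polytope) (use AttP in \<open>auto simp: polytope_def\<close>)
  interpret cs: conesetup C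
  proof
    show "convex C" unfolding C_def by (simp add: convex_conic_hull)
    show "conic C" unfolding C_def by (simp add: conic_conic_hull)
    show "closed C" using PH polyhedron_imp_closed by blast
    show "C \<noteq> {}" using AttC a0 by auto
  qed
  have Hd: "attractor_hull Att = cs.HH"
  proof -
    have "cs.HH = sphere 0 1 \<inter> C" by (rule cs.HH_def)
    then show ?thesis using True by (simp add: attractor_hull_def spherical_hull_def C_def)
  qed
  have Bd: "sph_boundary (attractor_hull Att) = cs.BD"
    by (simp add: Hd sph_boundary_def cs.BD_def)
  have PP: "cs.poleprop D"
    unfolding cs.poleprop_def
  proof
    fix B assume BD: "B \<in> D"
    have fB: "f B \<in> P" "f B \<notin> B" "- f B \<notin> B" using KO(4)[OF BD] by auto
    obtain n where n: "n \<noteq> 0" "n \<bullet> f B = 0" "\<forall>x\<in>B. n \<bullet> x = 0" using KO(4)[OF BD] by blast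
    obtain b where b: "b \<in> Att" "b = f B \<or> b = - f B" using att_pm[OF assms(3) KO(1) KO(3) fB(1)] by blast
    have "b \<in> C" using b AttC by auto
    moreover have "norm b = 1" using b Attn by simp
    moreover have "b \<notin> B" "- b \<notin> B" using b fB by auto
    moreover have "\<forall>p q. arc_ends p q \<longrightarrow> B = garc p q \<longrightarrow> (p \<times> q) \<bullet> b = 0"
    proof (intro allI impI)
      fix p q assume pq: "arc_ends p q" "B = garc p q"
      have "p \<in> B" "q \<in> B" using pq garc_ends_mem arc_ends_def by auto
      then have "p \<bullet> n = 0" "q \<bullet> n = 0" using n by (auto simp: inner_commute)
      moreover have "b \<bullet> n = 0" using b n by (auto simp: inner_commute)
      ultimately have "det3 p q b = 0" using coplanar[OF n(1)] by blast
      then show "(p \<times> q) \<bullet> b = 0" by (simp add: det3_def)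
    qed
    ultimately show "\<exists>b. b \<in> C \<and> norm b = 1 \<and> b \<notin> B \<and> - b \<notin> B \<and>
      (\<forall>p q. arc_ends p q \<longrightarrow> B = garc p q \<longrightarrow> (p \<times> q) \<bullet> b = 0)" by blast
  qed
  have xBD: "x \<in> cs.BD" using assms(6) Bd by simp
  have "cs.goodres D x" by (rule cs.mmain[OF SD PP PH assms(4) assms(5) xBD])
  then obtain B y F where res: "B \<in> D" "crosses_at B cs.BD y" "R_connected D cs.HH x y"
    "F face_of C" "aff_dim F = 2" "x \<in> F" "y \<in> F" "x \<noteq> y \<longrightarrow> \<not> (conic hull {y}) face_of C"
    unfolding cs.goodres_def by blast
  have a0n: "a0 \<noteq> 0" using Attn[OF a0] by auto
  have CH: "conic hull cs.HH = C" using cs.conic_hull_HH[of a0] a0 AttC a0n by auto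
  have yB: "y \<in> cs.BD" using res(2) unfolding crosses_at_def by simp
  have xn: "norm x = 1" "norm y = 1" using xBD yB cs.BD_sub cs.HH_def by auto
  have edge: "sph_edge (attractor_hull Att) (F \<inter> sphere 0 1)"
    unfolding sph_edge_def Hd CH using res by blast
  have "x \<in> F \<inter> sphere 0 1" "y \<in> F \<inter> sphere 0 1" using res xn by auto
  moreover have "x \<noteq> y \<longrightarrow> \<not> sph_vertex (attractor_hull Att) y"
    unfolding sph_vertex_def Hd CH using res by blast
  moreover have "crosses_at B (sph_boundary (attractor_hull Att)) y" using res(2) Bd by simp
  moreover have "R_connected D (attractor_hull Att) x y" using res(3) Hd by simp
  ultimately show ?thesis using res(1) edge by blast
qed


end
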